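(* For $\pi$ uniformly distributed on $Av_n(132)$, let $M(\pi)$ be the largest size of a permutation in $Av(231)\cap\{\tilde r_\pi(\pi_i):1\le i\le n\}$. Then the expected value of $M(\pi)$ is asymptotic to $\log_2(n)$ as $n\to\infty$.
   Context: $Av_n(\sigma)$ is the set of permutations of $\{1,\dots,n\}$ avoiding the pattern $\sigma$, and $Av(\sigma)=\bigcup_n Av_n(\sigma)$. For a permutation $\pi=\pi_1\cdots\pi_n$ and an entry $\pi_i$, $r_\pi(\pi_i)$ is the set of entries $\pi_k$ such that $\pi_k\le\pi_i$ and all entries of $\pi$ lying (in position) between $\pi_k$ and $\pi_i$ are $\le\pi_i$ (so $\pi_i\in r_\pi(\pi_i)$); $\tilde r_\pi(\pi_i)$ is the permutation obtained by taking the entries of $r_\pi(\pi_i)$ in their order of appearance in $\pi$ and standardizing them to $1,\dots,|r_\pi(\pi_i)|$. *)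

theory Defs
  imports Complex_Main "HOL-Library.Landau_Symbols"
begin

text \<open>Permutations of {1..n} are represented as lists of naturals (one-line notation);
positions are 0-based.\<close>

definition is_perm :: "nat \<Rightarrow> nat list \<Rightarrow> bool" where
  "is_perm n xs \<longleftrightarrow> distinct xs \<and> set xs = {1..n}"

definition order_iso :: "nat list \<Rightarrow> nat list \<Rightarrow> bool" where
  "order_iso ys zs \<longleftrightarrow> length ys = length zs \<and>
     (\<forall>i<length ys. \<forall>j<length ys. ys ! i < ys ! j \<longleftrightarrow> zs ! i < zs ! j)"

definition contains :: "nat list \<Rightarrow> nat list \<Rightarrow> bool" where
  "contains xs \<sigma> \<longleftrightarrow> (\<exists>ys \<in> set (subseqs xs). order_iso ys \<sigma>)"

definition Av_n :: "nat \<Rightarrow> nat list \<Rightarrow> nat list set" where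
  "Av_n n \<sigma> = {\<pi>. is_perm n \<pi> \<and> \<not> contains \<pi> \<sigma>}"

definition Av :: "nat list \<Rightarrow> nat list set" where
  "Av \<sigma> = (\<Union>n. Av_n n \<sigma>)"

text \<open>Positions of the entries of r_pi(pi_i).\<close>
definition r_pos :: "nat list \<Rightarrow> nat \<Rightarrow> nat set" where
  "r_pos \<pi> i = {k. k < length \<pi> \<and> \<pi> ! k \<le> \<pi> ! i \<and>
      (\<forall>j. min k i < j \<and> j < max k i \<longrightarrow> \<pi> ! j \<le> \<pi> ! i)}"

definition standardize :: "nat list \<Rightarrow> nat list" where
  "standardize xs = map (\<lambda>x. card {y \<in> set xs. y \<le> x}) xs"

definition r_tilde :: "nat list \<Rightarrow> nat \<Rightarrow> nat list" where
  "r_tilde \<pi> i = standardize (nths \<pi> (r_pos \<pi> i))"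

definition M :: "nat list \<Rightarrow> nat" where
  "M \<pi> = Max (insert 0 {length \<tau> | \<tau>. \<tau> \<in> Av [2,3,1] \<and>
                          (\<exists>i<length \<pi>. \<tau> = r_tilde \<pi> i)})"

definition EM :: "nat \<Rightarrow> real" where
  "EM n = (\<Sum>\<pi>\<in>Av_n n [1,3,2]. real (M \<pi>)) / real (card (Av_n n [1,3,2]))"

end

theory Submission
  imports Defs "HOL-Computational_Algebra.Formal_Power_Series" "HOL-Library.Sublist" "HOL-Real_Asymp.Real_Asymp"
begin


datatype tree = Leaf | Node (lch: tree) (rch: tree)

fun tsize :: "tree \<Rightarrow> nat" where
  "tsize Leaf = 0"
| "tsize (Node l r) = tsize l + tsize r + 1"

definition T :: "nat \<Rightarrow> tree set" where "T n = {t. tsize t = n}"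

lemma T_0: "T 0 = {Leaf}"
  unfolding T_def by (auto elim: tsize.elims)

lemma T_Suc: "T (Suc n) = (\<Union>a\<in>{..n}. (\<lambda>(l,r). Node l r) ` (T a \<times> T (n - a)))"
  unfolding T_def
proof (intro set_eqI iffI)
  fix t assume "t \<in> {t. tsize t = Suc n}"
  then obtain l r where "t = Node l r" "tsize l + tsize r = n" by (cases t) auto
  then show "t \<in> (\<Union>a\<in>{..n}. (\<lambda>(l,r). Node l r) ` ({t. tsize t = a} \<times> {t. tsize t = n - a}))"
    by (auto intro!: bexI[of _ "tsize l"] image_eqI[of _ _ "(l,r)"])
qed auto

lemma finite_T: "finite (T n)"
proof (induction n rule: less_induct)
  case (less n)
  show ?case
  proof (cases n)
    case 0 then show ?thesis by (simp add: T_0)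
  next
    case (Suc m)
    have "finite (T a)" if "a \<le> m" for a using less Suc that by auto
    then show ?thesis unfolding Suc T_Suc by (auto intro!: finite_imageI finite_cartesian_product)
  qed
qed

lemma sum_T_Suc:
  "(\<Sum>t\<in>T (Suc n). f t) = (\<Sum>a\<le>n. \<Sum>l\<in>T a. \<Sum>r\<in>T (n - a). f (Node l r))"
proof -
  have "(\<Sum>t\<in>T (Suc n). f t) = (\<Sum>a\<le>n. \<Sum>t\<in>(\<lambda>(l,r). Node l r) ` (T a \<times> T (n - a)). f t)"
    unfolding T_Suc
    by (rule sum.UNION_disjoint) (auto simp: finite_T, auto simp: T_def)
  also have "\<dots> = (\<Sum>a\<le>n. \<Sum>p\<in>T a \<times> T (n - a). f (Node (fst p) (snd p)))"
    by (rule sum.cong[OF refl], subst sum.reindex) (auto simp: inj_on_def case_prod_beta)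
  also have "\<dots> = (\<Sum>a\<le>n. \<Sum>l\<in>T a. \<Sum>r\<in>T (n - a). f (Node l r))"
    by (rule sum.cong[OF refl], subst sum.cartesian_product) (auto simp: case_prod_beta)
  finally show ?thesis .
qed

definition C :: "nat \<Rightarrow> nat" where "C n = card (T n)"

lemma C_0: "C 0 = 1" by (simp add: C_def T_0)

lemma C_Suc: "C (Suc n) = (\<Sum>a\<le>n. C a * C (n - a))"
  using sum_T_Suc[where f="\<lambda>_. 1::nat" and n=n] by (simp add: C_def)


definition cf :: "real fps" where "cf = Abs_fps (\<lambda>n. real (C n))"

lemma cf_eq: "cf = 1 + fps_X * (cf * cf)"
proof (rule fps_ext)
  fix n show "fps_nth cf n = fps_nth (1 + fps_X * (cf * cf)) n"
  proof (cases n)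
    case 0 then show ?thesis by (simp add: cf_def C_0)
  next
    case (Suc m)
    have "fps_nth (fps_X * (cf * cf)) (Suc m) = fps_nth (cf * cf) m" by (simp only: fps_X_mult_nth) simp
    also have "\<dots> = real (C (Suc m))" by (simp only: fps_mult_nth C_Suc atMost_atLeast0) (simp add: cf_def)
    finally show ?thesis using Suc by (simp add: cf_def)
  qed
qed

lemma cf_deriv: "fps_deriv cf = cf * cf + 2 * fps_X * cf * fps_deriv cf"
proof -
  have "fps_deriv cf = fps_deriv (1 + fps_X * (cf * cf))" using cf_eq by simp
  then show ?thesis by (simp add: algebra_simps)
qed

lemma cf_key: "fps_X * (fps_deriv cf * (1 - fps_const 4 * fps_X)) = 1 - cf + fps_const 2 * (fps_X * cf)"
proof -
  have "fps_X * fps_deriv cf * (1 - 4 * fps_X) = 1 - cf + 2 * fps_X * cf"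
    using cf_eq cf_deriv by algebra
  then show ?thesis by (simp add: numeral_fps_const mult.assoc)
qed

lemma C_ratio_Suc: "real (j+3) * real (C (Suc (Suc j))) = real (4 * j + 6) * real (C (Suc j))"
proof -
  let ?D = "fps_deriv cf"
  have e: "fps_nth (fps_X * (?D * (1 - fps_const 4 * fps_X))) (Suc (Suc j))
     = fps_nth (1 - cf + fps_const 2 * (fps_X * cf)) (Suc (Suc j))"
    using cf_key by (rule arg_cong)
  have l: "fps_nth (fps_X * (?D * (1 - fps_const 4 * fps_X))) (Suc (Suc j))
      = fps_nth ?D (Suc j) - 4 * fps_nth ?D j"
  proof -
    have "?D * (1 - fps_const 4 * fps_X) = ?D - fps_const 4 * (?D * fps_X)"
      by (simp add: algebra_simps)
    then show ?thesis by (simp only: fps_X_mult_nth fps_sub_nth fps_mult_left_const_nth fps_X_mult_right_nth) simp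
  qed
  have r: "fps_nth (1 - cf + fps_const 2 * (fps_X * cf)) (Suc (Suc j))
      = - fps_nth cf (Suc (Suc j)) + 2 * fps_nth cf (Suc j)"
    by (simp only: fps_add_nth fps_X_mult_nth fps_sub_nth fps_mult_left_const_nth) simp
  have "fps_nth ?D (Suc j) - 4 * fps_nth ?D j = - fps_nth cf (Suc (Suc j)) + 2 * fps_nth cf (Suc j)"
    using e l r by simp
  then have "real (Suc (Suc j)) * C (Suc (Suc j)) - 4 * (real (Suc j) * C (Suc j)) = - C (Suc (Suc j)) + 2 * C (Suc j)"
    by (simp add: cf_def)
  then have "real (j+3) * C (Suc (Suc j)) = real (4*j + 6) * C (Suc j)"
    by (simp add: algebra_simps)
  then show ?thesis by simp
qed

lemma C_1: "C 1 = 1" using C_Suc[of 0] by (simp add: C_0)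

lemma C_ratio: "real (j + 2) * real (C (Suc j)) = real (4 * j + 2) * real (C j)"
proof (cases j)
  case 0 then show ?thesis using C_1 by (simp add: C_0)
next
  case (Suc i) then show ?thesis using C_ratio_Suc[of i] by (simp add: add.commute)
qed


lemma sum_T_Suc_prod:
  fixes f g :: "tree \<Rightarrow> 'a::comm_semiring_1"
  shows "(\<Sum>t\<in>T (Suc n). f (lch t) * g (rch t)) = (\<Sum>a\<le>n. (\<Sum>l\<in>T a. f l) * (\<Sum>r\<in>T (n - a). g r))"
  by (simp add: sum_T_Suc sum_product)

lemma conv_rev:
  fixes f g :: "nat \<Rightarrow> 'a::comm_semiring_1"
  shows "(\<Sum>a\<le>n. f a * g (n - a)) = (\<Sum>a\<le>n. g a * f (n - a))"
  by (rule sum.reindex_bij_witness[where i="\<lambda>a. n - a" and j="\<lambda>a. n - a"]) (auto simp: mult.commute)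

lemma conv_shift:
  fixes f g :: "nat \<Rightarrow> 'a::comm_semiring_1"
  assumes "\<And>a. a < k \<Longrightarrow> f a = 0" "k \<le> n"
  shows "(\<Sum>a\<le>n. f a * g (n - a)) = (\<Sum>a\<le>n - k. f (a + k) * g (n - k - a))"
proof -
  have "(\<Sum>a\<le>n. f a * g (n - a)) = (\<Sum>a\<in>{k..n}. f a * g (n - a))"
    by (rule sum.mono_neutral_right) (auto simp: assms)
  also have "\<dots> = (\<Sum>a\<le>n - k. f (a + k) * g (n - k - a))"
    by (rule sum.reindex_bij_witness[where i="\<lambda>a. a + k" and j="\<lambda>a. a - k"]) (use assms in auto)
  finally show ?thesis .
qed

lemma conv_zero:
  fixes f g :: "nat \<Rightarrow> 'a::comm_semiring_1"
  assumes "\<And>a. a < k \<Longrightarrow> f a = 0" "n < k"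
  shows "(\<Sum>a\<le>n. f a * g (n - a)) = 0"
  using assms by (intro sum.neutral) auto

definition S :: "nat \<Rightarrow> nat" where "S N = (\<Sum>a\<le>N. (a + 1) * C a * C (N - a))"

lemma S_eq: "2 * S N = (N + 2) * C (N + 1)"
proof -
  have "S N = (\<Sum>a\<le>N. ((a + 1) * C a) * C (N - a))" by (simp add: S_def mult.assoc)
  also have "\<dots> = (\<Sum>a\<le>N. C a * ((N - a + 1) * C (N - a)))"
    by (rule conv_rev[where f="\<lambda>a. (a + 1) * C a" and g=C])
  also have "\<dots> = (\<Sum>a\<le>N. (N - a + 1) * C a * C (N - a))"
    by (rule sum.cong[OF refl]) (metis mult.commute mult.assoc)
  finally have e: "S N = (\<Sum>a\<le>N. (N - a + 1) * C a * C (N - a))" .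
  have "2 * S N = S N + (\<Sum>a\<le>N. (N - a + 1) * C a * C (N - a))" using e by simp
  also have "\<dots> = (\<Sum>a\<le>N. (N + 2) * (C a * C (N - a)))"
    unfolding S_def sum.distrib[symmetric]
  proof (rule sum.cong[OF refl])
    fix a assume "a \<in> {..N}" then have "a \<le> N" by simp
    then have "(a+1) + (N-a+1) = N+2" by simp
    then show "(a+1)*C a*C(N-a) + (N-a+1)*C a*C(N-a) = (N+2)*(C a*C(N-a))"
      by (metis add_mult_distrib mult.assoc)
  qed
  also have "\<dots> = (N + 2) * C (N + 1)" by (simp add: C_Suc sum_distrib_left)
  finally show ?thesis .
qed

fun path :: "tree \<Rightarrow> bool" where
  "path Leaf = True"
| "path (Node l r) = ((l = Leaf \<or> r = Leaf) \<and> path l \<and> path r)"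

fun Nk :: "nat \<Rightarrow> tree \<Rightarrow> nat" where
  "Nk k Leaf = 0"
| "Nk k (Node l r) = Nk k l + Nk k r + (if path (Node l r) \<and> tsize (Node l r) = k then 1 else 0)"

fun mt :: "tree \<Rightarrow> nat" where
  "mt Leaf = 0"
| "mt (Node l r) = max (mt l) (max (mt r) (if path (Node l r) then tsize (Node l r) else 0))"

lemma Nk_small: "tsize t < k \<Longrightarrow> Nk k t = 0"
  by (induction t) auto

lemma path_Nk: "path t \<Longrightarrow> 1 \<le> k \<Longrightarrow> k \<le> tsize t \<Longrightarrow> Nk k t \<ge> 1"
proof (induction t)
  case Leaf then show ?case by simp
next
  case (Node l r)
  show ?case
  proof (cases "tsize (Node l r) = k")
    case True then show ?thesis using Node.prems by simp
  next
    case False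
    then have "k \<le> tsize l \<or> k \<le> tsize r" using Node.prems by auto
    then show ?thesis using Node by auto
  qed
qed

lemma mt_Nk: "1 \<le> k \<Longrightarrow> k \<le> mt t \<Longrightarrow> Nk k t \<ge> 1"
proof (induction t)
  case Leaf then show ?case by simp
next
  case (Node l r)
  have "k \<le> mt l \<or> k \<le> mt r \<or> (path (Node l r) \<and> k \<le> tsize (Node l r))"
    using Node.prems(2) by (simp only: mt.simps le_max_iff_disj) (auto split: if_splits)
  then consider "k \<le> mt l" | "k \<le> mt r" | "path (Node l r)" "k \<le> tsize (Node l r)"
    by blast
  then show ?case
  proof cases
    case 3 then show ?thesis using path_Nk[OF 3(1) Node.prems(1) 3(2)] by simp
  qed (use Node in auto)
qed

lemma Nk_mt: "Nk k t \<ge> 1 \<Longrightarrow> k \<le> mt t"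
proof (induction t)
  case (Node l r)
  have "Nk k l \<ge> 1 \<or> Nk k r \<ge> 1 \<or> (path (Node l r) \<and> tsize (Node l r) = k)"
    using Node.prems by (simp only: Nk.simps) (auto split: if_splits)
  then show ?case using Node.IH by (auto simp only: mt.simps le_max_iff_disj split: if_splits)
qed simp

lemma mt_le: "mt t \<le> tsize t"
  by (induction t) auto

lemma Nk_0: "Nk 0 t = 0"
  by (induction t) auto

definition Pset :: "nat \<Rightarrow> tree set" where "Pset n = {t \<in> T n. path t}"

lemma Pset_Suc: "n > 0 \<Longrightarrow> Pset (Suc n) = Node Leaf ` Pset n \<union> (\<lambda>l. Node l Leaf) ` Pset n"
  unfolding Pset_def T_def
proof (intro set_eqI iffI)
  fix t assume "n > 0" "t \<in> {t \<in> {t. tsize t = Suc n}. path t}"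
  then show "t \<in> Node Leaf ` {t \<in> {t. tsize t = n}. path t} \<union> (\<lambda>l. Node l Leaf) ` {t \<in> {t. tsize t = n}. path t}"
    by (cases t) auto
qed auto

lemma card_Pset: "k \<ge> 1 \<Longrightarrow> card (Pset k) = 2 ^ (k - 1)"
proof (induction k rule: nat_induct_at_least)
  case base
  have "Pset 1 = {Node Leaf Leaf}" unfolding Pset_def T_def
    by (auto elim!: tsize.elims)
  then show ?case by simp
next
  case (Suc n)
  have fin: "finite (Pset n)" using finite_T[of n] by (simp add: Pset_def)
  have "card (Pset (Suc n)) = card (Node Leaf ` Pset n) + card ((\<lambda>l. Node l Leaf) ` Pset n)"
  proof -
    have e: "Pset (Suc n) = Node Leaf ` Pset n \<union> (\<lambda>l. Node l Leaf) ` Pset n"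
      using Pset_Suc[of n] Suc(1) by simp
    have d: "Node Leaf ` Pset n \<inter> (\<lambda>l. Node l Leaf) ` Pset n = {}"
      using Suc(1) by (auto simp: Pset_def T_def)
    show ?thesis unfolding e by (rule card_Un_disjoint) (use fin d in auto)
  qed
  also have "\<dots> = 2 * card (Pset n)" by (simp add: card_image inj_on_def)
  finally show ?case using Suc by (cases n) auto
qed


definition Asum :: "nat \<Rightarrow> nat \<Rightarrow> nat" where "Asum n k = (\<Sum>t\<in>T n. Nk k t)"
definition Bsum :: "nat \<Rightarrow> nat \<Rightarrow> nat" where "Bsum n k = (\<Sum>t\<in>T n. Nk k t * (Nk k t - 1))"

definition Acl :: "nat \<Rightarrow> nat \<Rightarrow> nat" where
  "Acl n k = (if 1 \<le> k \<and> k \<le> n then 2^(k-1) * (n-k+1) * C (n-k) else 0)"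
definition Bcl :: "nat \<Rightarrow> nat \<Rightarrow> nat" where
  "Bcl n k = (if 1 \<le> k \<and> 2*k \<le> n then 4^(k-1) * ((n-2*k+1) * (n-2*k)) * C (n-2*k) else 0)"

lemma T_Node: "t \<in> T (Suc n) \<Longrightarrow> t = Node (lch t) (rch t)"
  by (cases t) (auto simp: T_def)

lemma sum_indicator_Pset:
  "(\<Sum>t\<in>T m. if path t \<and> m = k then 1 else 0) = (if m = k then card (Pset m) else (0::nat))"
  by (simp add: Pset_def finite_T sum.inter_filter[symmetric])

lemma T_SucE: "t \<in> T (Suc n) \<Longrightarrow> (\<And>l r. t = Node l r \<Longrightarrow> tsize l + tsize r = n \<Longrightarrow> P) \<Longrightarrow> P"
  by (cases t) (auto simp: T_def)

lemma Nk_Node_T: "t \<in> T (Suc n) \<Longrightarrow>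
   Nk k t = Nk k (lch t) * 1 + 1 * Nk k (rch t) + (if path t \<and> Suc n = k then 1 else 0)"
  by (erule T_SucE) auto

lemma Asum_Suc: "Asum (Suc n) k = (\<Sum>a\<le>n. Asum a k * C (n-a) + C a * Asum (n-a) k)
     + (if Suc n = k then card (Pset (Suc n)) else 0)"
proof -
  have "Asum (Suc n) k = (\<Sum>t\<in>T (Suc n). Nk k (lch t) * 1 + 1 * Nk k (rch t) + (if path t \<and> Suc n = k then 1 else 0))"
    unfolding Asum_def by (rule sum.cong[OF refl]) (rule Nk_Node_T)
  also have "\<dots> = (\<Sum>t\<in>T (Suc n). Nk k (lch t) * 1) + (\<Sum>t\<in>T (Suc n). 1 * Nk k (rch t))
      + (\<Sum>t\<in>T (Suc n). if path t \<and> Suc n = k then 1 else 0)"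
    by (simp only: sum.distrib)
  also have "\<dots> = (\<Sum>a\<le>n. Asum a k * C (n-a) + C a * Asum (n-a) k)
     + (if Suc n = k then card (Pset (Suc n)) else 0)"
    unfolding sum_T_Suc_prod[where f="Nk k" and g="\<lambda>_. 1"] sum_T_Suc_prod[where g="Nk k" and f="\<lambda>_. 1"]
      sum_indicator_Pset
    by (simp add: sum.distrib Asum_def C_def)
  finally show ?thesis .
qed

lemma nat_sq_split: "(x+y)*(x+y-1) = x*(x-1) + y*(y-1) + 2*x*y" for x y :: nat
  by (cases x; cases y) (simp_all add: algebra_simps)

lemma Q_Node_T: "t \<in> T (Suc n) \<Longrightarrow>
   Nk k t * (Nk k t - 1) = Nk k (lch t) * (Nk k (lch t) - 1) * 1 + 1 * (Nk k (rch t) * (Nk k (rch t) - 1))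
     + 2 * (Nk k (lch t) * Nk k (rch t))"
proof (erule T_SucE)
  fix l r assume e: "t = Node l r" and s: "tsize l + tsize r = n"
  show ?thesis
  proof (cases "path t \<and> Suc n = k")
    case True
    then have "Nk k l = 0" "Nk k r = 0" using s by (auto intro!: Nk_small)
    then show ?thesis using e True s by simp
  next
    case False
    then have "Nk k t = Nk k l + Nk k r" using e s by auto
    then show ?thesis using e nat_sq_split[of "Nk k l" "Nk k r"] by (simp add: mult.assoc)
  qed
qed

lemma Bsum_Suc: "Bsum (Suc n) k = (\<Sum>a\<le>n. Bsum a k * C (n-a) + C a * Bsum (n-a) k + 2 * (Asum a k * Asum (n-a) k))"
proof -
  have "Bsum (Suc n) k = (\<Sum>t\<in>T (Suc n). Nk k (lch t) * (Nk k (lch t) - 1) * 1 + 1 * (Nk k (rch t) * (Nk k (rch t) - 1))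
     + 2 * (Nk k (lch t) * Nk k (rch t)))"
    unfolding Bsum_def by (rule sum.cong[OF refl]) (rule Q_Node_T)
  also have "\<dots> = (\<Sum>t\<in>T (Suc n). Nk k (lch t) * (Nk k (lch t) - 1) * 1) + (\<Sum>t\<in>T (Suc n). 1 * (Nk k (rch t) * (Nk k (rch t) - 1)))
     + 2 * (\<Sum>t\<in>T (Suc n). Nk k (lch t) * Nk k (rch t))"
    by (simp only: sum.distrib sum_distrib_left)
  also have "\<dots> = (\<Sum>a\<le>n. Bsum a k * C (n-a) + C a * Bsum (n-a) k + 2 * (Asum a k * Asum (n-a) k))"
    unfolding sum_T_Suc_prod[where f="\<lambda>t. Nk k t * (Nk k t - 1)" and g="\<lambda>_. 1"]
      sum_T_Suc_prod[where g="\<lambda>t. Nk k t * (Nk k t - 1)" and f="\<lambda>_. 1"]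
      sum_T_Suc_prod[where g="Nk k" and f="Nk k"]
    by (simp add: sum.distrib Asum_def Bsum_def C_def sum_distrib_left)
  finally show ?thesis .
qed


lemma Acl_small: "a < k \<Longrightarrow> Acl a k = 0" by (simp add: Acl_def)
lemma Bcl_small: "a < 2*k \<Longrightarrow> Bcl a k = 0" by (simp add: Bcl_def)

lemma Acl_shift: "k \<ge> 1 \<Longrightarrow> Acl (a + k) k = 2^(k-1) * ((a+1) * C a)"
  by (simp add: Acl_def algebra_simps)

lemma A_eq: "Asum n k = Acl n k"
proof (induction n rule: less_induct)
  case (less n)
  show ?case
  proof (cases "k = 0")
    case True then show ?thesis by (simp add: Asum_def Acl_def Nk_0)
  next
    case k: False
    show ?thesis
    proof (cases n)
      case 0 then show ?thesis using k by (simp add: Asum_def Acl_def T_0)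
    next
      case (Suc m)
      have IH: "\<And>a. a \<le> m \<Longrightarrow> Asum a k = Acl a k" using less Suc by auto
      have "Asum n k = (\<Sum>a\<le>m. Acl a k * C (m-a) + C a * Acl (m-a) k)
         + (if Suc m = k then card (Pset (Suc m)) else 0)"
        unfolding Suc Asum_Suc by (simp add: IH)
      also have "\<dots> = (\<Sum>a\<le>m. Acl a k * C (m-a)) + (\<Sum>a\<le>m. C a * Acl (m-a) k)
         + (if Suc m = k then card (Pset (Suc m)) else 0)"
        by (simp add: sum.distrib)
      also have "(\<Sum>a\<le>m. C a * Acl (m-a) k) = (\<Sum>a\<le>m. Acl a k * C (m-a))"
        by (rule conv_rev)
      finally have e: "Asum n k = 2 * (\<Sum>a\<le>m. Acl a k * C (m-a)) + (if Suc m = k then card (Pset (Suc m)) else 0)"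
        by simp
      show ?thesis
      proof (cases "k \<le> m")
        case True
        have "(\<Sum>a\<le>m. Acl a k * C (m-a)) = (\<Sum>a\<le>m-k. Acl (a+k) k * C (m-k-a))"
          by (rule conv_shift) (auto simp: Acl_small True)
        also have "\<dots> = 2^(k-1) * S (m-k)"
          using k by (simp add: Acl_shift S_def sum_distrib_left mult.assoc)
        finally have "Asum n k = 2^(k-1) * (2 * S (m-k))" using e True by simp
        also have "\<dots> = 2^(k-1) * ((m - k + 2) * C (m - k + 1))" by (simp add: S_eq)
        also have "\<dots> = Acl n k" using True k Suc by (simp add: Acl_def Suc_diff_le algebra_simps)
        finally show ?thesis .
      next
        case False
        have z: "(\<Sum>a\<le>m. Acl a k * C (m-a)) = 0"
          by (rule conv_zero[where k=k]) (use False in \<open>auto simp: Acl_small\<close>)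
        show ?thesis
        proof (cases "Suc m = k")
          case True then show ?thesis using e z k Suc card_Pset[of k] by (simp add: Acl_def C_0)
        next
          case False then show ?thesis using e z k Suc \<open>\<not> k \<le> m\<close> by (simp add: Acl_def)
        qed
      qed
    qed
  qed
qed

definition S1 :: "nat \<Rightarrow> nat" where "S1 q = (\<Sum>a\<le>q. (a + 1) * a * C a * C (q - a))"
definition S2 :: "nat \<Rightarrow> nat" where "S2 q = (\<Sum>a\<le>q. (a + 1) * (q - a + 1) * C a * C (q - a))"

lemma S12: "S1 q + S2 q = (q + 1) * S q"
  unfolding S1_def S2_def S_def sum.distrib[symmetric] sum_distrib_left
proof (rule sum.cong[OF refl])
  fix a assume "a \<in> {..q}" then have "a \<le> q" by simp
  then obtain d where "q = a + d" using le_Suc_ex by blast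
  then have "(a + 1) * a + (a + 1) * (q - a + 1) = (q + 1) * (a + 1)"
    by (simp add: algebra_simps)
  then show "(a + 1) * a * C a * C (q - a) + (a + 1) * (q - a + 1) * C a * C (q - a) =
    (q + 1) * ((a + 1) * C a * C (q - a))"
    by (metis add_mult_distrib mult.assoc)
qed

lemma B_eq: "Bsum n k = Bcl n k"
proof (induction n rule: less_induct)
  case (less n)
  show ?case
  proof (cases "k = 0")
    case True then show ?thesis by (simp add: Bsum_def Bcl_def Nk_0)
  next
    case k: False
    show ?thesis
    proof (cases n)
      case 0 then show ?thesis using k by (simp add: Bsum_def Bcl_def T_0)
    next
      case (Suc m)
      have IH: "\<And>a. a \<le> m \<Longrightarrow> Bsum a k = Bcl a k" using less Suc by auto
      have e0: "Bsum n k = (\<Sum>a\<le>m. Bcl a k * C (m-a) + C a * Bcl (m-a) k + 2 * (Acl a k * Acl (m-a) k))"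
        unfolding Suc Bsum_Suc by (simp add: IH A_eq)
      also have "\<dots> = (\<Sum>a\<le>m. Bcl a k * C (m-a)) + (\<Sum>a\<le>m. C a * Bcl (m-a) k) + 2 * (\<Sum>a\<le>m. Acl a k * Acl (m-a) k)"
        by (simp add: sum.distrib sum_distrib_left)
      also have "(\<Sum>a\<le>m. C a * Bcl (m-a) k) = (\<Sum>a\<le>m. Bcl a k * C (m-a))"
        by (rule conv_rev)
      finally have e: "Bsum n k = 2 * (\<Sum>a\<le>m. Bcl a k * C (m-a)) + 2 * (\<Sum>a\<le>m. Acl a k * Acl (m-a) k)"
        by simp
      show ?thesis
      proof (cases "2 * k \<le> m")
        case True
        let ?M = "m - 2 * k"
        have "(\<Sum>a\<le>m. Bcl a k * C (m-a)) = (\<Sum>a\<le>m-2*k. Bcl (a+2*k) k * C (m-2*k-a))"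
          by (rule conv_shift) (auto simp: Bcl_small True)
        also have "\<dots> = 4^(k-1) * S1 ?M"
          using k by (simp add: Bcl_def S1_def sum_distrib_left mult.assoc)
        finally have x: "(\<Sum>a\<le>m. Bcl a k * C (m-a)) = 4^(k-1) * S1 ?M" .
        have "(\<Sum>a\<le>m. Acl a k * Acl (m-a) k) = (\<Sum>a\<le>m-k. Acl (a+k) k * Acl (m-k-a) k)"
          by (rule conv_shift) (use True in \<open>auto simp: Acl_small\<close>)
        also have "\<dots> = (\<Sum>a\<le>m-k. Acl a k * Acl ((m-k-a)+k) k)"
          by (rule conv_rev[where f="\<lambda>a. Acl (a+k) k" and g="\<lambda>a. Acl a k"])
        also have "\<dots> = (\<Sum>a\<le>m-k-k. Acl (a+k) k * Acl ((m-k-k-a)+k) k)"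
          by (rule conv_shift[where g="\<lambda>j. Acl (j+k) k"]) (use True in \<open>auto simp: Acl_small\<close>)
        also have "\<dots> = (\<Sum>a\<le>?M. (2^(k-1)*((a+1)*C a)) * (2^(k-1)*((?M-a+1)*C (?M-a))))"
        proof -
          have mm: "m-k-k = ?M" by simp
          have k1: "1 \<le> k" using k by simp
          show ?thesis unfolding mm by (simp only: Acl_shift[OF k1])
        qed
        also have "\<dots> = 4^(k-1) * S2 ?M"
        proof -
          have p: "2^(k-1) * 2^(k-1) = (4::nat)^(k-1)" by (simp flip: power_mult_distrib)
          show ?thesis unfolding S2_def sum_distrib_left
            by (rule sum.cong[OF refl]) (subst p[symmetric], simp only: mult_ac)
        qed
        finally have z: "(\<Sum>a\<le>m. Acl a k * Acl (m-a) k) = 4^(k-1) * S2 ?M" .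
        have "Bsum n k = 2 * 4^(k-1) * (S1 ?M + S2 ?M)" using e x z by (simp add: distrib_left mult.assoc)
        also have "\<dots> = 2 * 4^(k-1) * ((?M + 1) * S ?M)" by (simp only: S12)
        also have "\<dots> = 4^(k-1) * ((?M+1) * (2 * S ?M))" by simp
        also have "\<dots> = 4^(k-1) * ((?M+1) * ((?M + 2) * C (?M + 1)))" by (simp add: S_eq)
        also have "\<dots> = Bcl n k"
        proof -
          obtain d where d: "m = 2*k + d" using True le_Suc_ex by blast
          show ?thesis using k Suc by (simp add: Bcl_def d algebra_simps)
        qed
        finally show ?thesis .
      next
        case False
        have x: "(\<Sum>a\<le>m. Bcl a k * C (m-a)) = 0"
          by (rule conv_zero[where k="2*k"]) (use False in \<open>auto simp: Bcl_small\<close>)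
        have z: "(\<Sum>a\<le>m. Acl a k * Acl (m-a) k) = 0"
          by (rule sum.neutral) (use False in \<open>auto simp: Acl_def\<close>)
        show ?thesis using e x z False Suc by (auto simp: Bcl_def)
      qed
    qed
  qed
qed


lemma sorted_wrt_minus1: "sorted_wrt (<) xs \<Longrightarrow> \<forall>j\<in>set xs. j \<ge> 1 \<Longrightarrow> sorted_wrt (<) (map (\<lambda>j. j - (1::nat)) xs)"
  by (induction xs) auto

lemma subseq_idx:
  "sorted_wrt (<) ix \<Longrightarrow> \<forall>i\<in>set ix. i < length xs \<Longrightarrow> subseq (map ((!) xs) ix) xs"
proof (induction xs arbitrary: ix)
  case Nil then show ?case by (cases "ix") auto
next
  case (Cons x xs)
  show ?case
  proof (cases "ix")
    case Nil then show ?thesis by simp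
  next
    case (Cons i ixx)
    have pos: "\<forall>j\<in>set ixx. j > i" using Cons.prems(1) \<open>ix = i # ixx\<close> by simp
    have s': "sorted_wrt (<) (map (\<lambda>j. j - 1) ixx)"
      using Cons.prems(1) \<open>ix = i # ixx\<close> pos by (intro sorted_wrt_minus1) auto
    show ?thesis
    proof (cases "i = 0")
      case True
      have b: "\<forall>j\<in>set (map (\<lambda>j. j - 1) ixx). j < length xs"
        using Cons.prems(2) \<open>ix = i # ixx\<close> pos True by auto
      have m: "map ((!) (x # xs)) ix = x # map ((!) xs) (map (\<lambda>j. j - 1) ixx)"
        using pos True \<open>ix = i # ixx\<close> by (auto simp: nth_Cons')
      show ?thesis unfolding m using Cons.IH[OF s' b] by simp
    next
      case False
      have s2: "sorted_wrt (<) (map (\<lambda>j. j - 1) ix)"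
        using Cons.prems(1) \<open>ix = i # ixx\<close> pos False by (intro sorted_wrt_minus1) auto
      have b: "\<forall>j\<in>set (map (\<lambda>j. j - 1) ix). j < length xs"
        using Cons.prems(2) \<open>ix = i # ixx\<close> pos False by auto
      have m2: "map ((!) (x # xs)) ix = map ((!) xs) (map (\<lambda>j. j - 1) ix)"
        using pos False \<open>ix = i # ixx\<close> by (auto simp: nth_Cons')
      show ?thesis unfolding m2 by (rule list_emb_Cons[OF Cons.IH[OF s2 b]])
    qed
  qed
qed

lemma subseq_idx_ex:
  "subseq ys xs \<Longrightarrow> \<exists>ix. sorted_wrt (<) ix \<and> (\<forall>i\<in>set ix. i < length xs) \<and> ys = map ((!) xs) ix"
proof (induction rule: list_emb.induct)
  case (list_emb_Nil ys) then show ?case by (intro exI[of _ "[]"]) simp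
next
  case (list_emb_Cons xs ys y)
  then obtain ix where "sorted_wrt (<) ix" "\<forall>i\<in>set ix. i < length ys" "xs = map ((!) ys) ix" by blast
  then show ?case by (intro exI[of _ "map Suc ix"]) (auto simp: sorted_wrt_map)
next
  case (list_emb_Cons2 x y xs ys)
  then obtain ix where "sorted_wrt (<) ix" "\<forall>i\<in>set ix. i < length ys" "xs = map ((!) ys) ix" by blast
  moreover have "x = y" using list_emb_Cons2 by simp
  ultimately show ?case by (intro exI[of _ "0 # map Suc ix"]) (auto simp: sorted_wrt_map)
qed

lemma contains_idx: "contains xs \<sigma> \<longleftrightarrow>
  (\<exists>ix. sorted_wrt (<) ix \<and> (\<forall>i\<in>set ix. i < length xs) \<and> order_iso (map ((!) xs) ix) \<sigma>)"
  unfolding contains_def using subseq_idx subseq_idx_ex by fastforce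

lemma order_iso3: "order_iso [a,b,c] [x,y,z] \<longleftrightarrow>
  ((a < b) = (x < y)) \<and> ((b < a) = (y < x)) \<and> ((a < c) = (x < z)) \<and> ((c < a) = (z < x)) \<and>
  ((b < c) = (y < z)) \<and> ((c < b) = (z < y))"
proof -
  have all3: "(\<forall>i<Suc (Suc (Suc 0)). P i) = (P 0 \<and> P (Suc 0) \<and> P (Suc (Suc 0)))" for P :: "nat \<Rightarrow> bool"
    by (auto simp: less_Suc_eq)
  show ?thesis unfolding order_iso_def by (simp add: all3) blast
qed

lemma contains3: "length \<sigma> = 3 \<Longrightarrow> contains xs \<sigma> \<longleftrightarrow>
  (\<exists>i j k. i < j \<and> j < k \<and> k < length xs \<and> order_iso [xs!i, xs!j, xs!k] \<sigma>)"
  unfolding contains_idx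
proof
  assume "length \<sigma> = 3" and "\<exists>ix. sorted_wrt (<) ix \<and> (\<forall>i\<in>set ix. i < length xs) \<and> order_iso (map ((!) xs) ix) \<sigma>"
  then obtain ix where h: "sorted_wrt (<) ix" "\<forall>i\<in>set ix. i < length xs" "order_iso (map ((!) xs) ix) \<sigma>"
    by blast
  then have "length ix = 3" using \<open>length \<sigma> = 3\<close> by (simp add: order_iso_def)
  then obtain i j k where "ix = [i,j,k]"
    by (auto simp: numeral_3_eq_3 length_Suc_conv)
  then show "\<exists>i j k. i < j \<and> j < k \<and> k < length xs \<and> order_iso [xs!i, xs!j, xs!k] \<sigma>"
    using h by auto
next
  assume "\<exists>i j k. i < j \<and> j < k \<and> k < length xs \<and> order_iso [xs!i, xs!j, xs!k] \<sigma>"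
  then obtain i j k where "i < j" "j < k" "k < length xs" "order_iso [xs!i, xs!j, xs!k] \<sigma>" by blast
  then show "\<exists>ix. sorted_wrt (<) ix \<and> (\<forall>i\<in>set ix. i < length xs) \<and> order_iso (map ((!) xs) ix) \<sigma>"
    by (intro exI[of _ "[i,j,k]"]) auto
qed

lemma contains132: "contains xs [1,3,2] \<longleftrightarrow>
  (\<exists>i j k. i < j \<and> j < k \<and> k < length xs \<and> xs!i < xs!k \<and> xs!k < xs!j)"
proof -
  have "\<And>a b c::nat. order_iso [a,b,c] [1,3,2] \<longleftrightarrow> a < c \<and> c < b" by (auto simp: order_iso3)
  then show ?thesis by (subst contains3) auto
qed

lemma contains231: "contains xs [2,3,1] \<longleftrightarrow>
  (\<exists>i j k. i < j \<and> j < k \<and> k < length xs \<and> xs!k < xs!i \<and> xs!i < xs!j)"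
proof -
  have "\<And>a b c::nat. order_iso [a,b,c] [2,3,1] \<longleftrightarrow> c < a \<and> a < b" by (auto simp: order_iso3)
  then show ?thesis by (subst contains3) auto
qed


fun phi :: "tree \<Rightarrow> nat list" where
  "phi Leaf = []"
| "phi (Node l r) = map (\<lambda>x. x + tsize r) (phi l) @ (tsize l + tsize r + 1) # phi r"

lemma length_phi [simp]: "length (phi t) = tsize t"
  by (induction t) auto

lemma set_phi: "set (phi t) = {1..tsize t}"
proof (induction t)
  case (Node l r)
  have "(\<lambda>x. x + tsize r) ` {1..tsize l} = {tsize r + 1..tsize l + tsize r}"
    by (auto simp: image_iff intro!: bexI[of _ "_ - tsize r"])
  then show ?case using Node by auto
qed simp

lemma distinct_phi: "distinct (phi t)"
proof (induction t)
  case (Node l r)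
  have "inj (\<lambda>x. x + tsize r)" by (auto simp: inj_on_def)
  then show ?case using Node by (auto simp: distinct_map set_phi inj_on_def)
qed simp

lemma is_perm_phi: "is_perm (tsize t) (phi t)"
  by (simp add: is_perm_def set_phi distinct_phi)

lemma phi_nth_l: "p < tsize l \<Longrightarrow> phi (Node l r) ! p = phi l ! p + tsize r"
  by (simp add: nth_append)

lemma phi_nth_a: "phi (Node l r) ! tsize l = tsize l + tsize r + 1"
  by (simp add: nth_append)

lemma phi_nth_r: "tsize l < p \<Longrightarrow> phi (Node l r) ! p = phi r ! (p - tsize l - 1)"
  by (simp add: nth_append nth_Cons')

lemma phi_l_range: "p < tsize l \<Longrightarrow> 1 \<le> phi l ! p \<and> phi l ! p \<le> tsize l"
  using set_phi[of l] nth_mem[of p "phi l"] by auto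

lemma phi_r_range: "tsize l < p \<Longrightarrow> p < tsize l + tsize r + 1 \<Longrightarrow> 1 \<le> phi r ! (p - tsize l - 1) \<and> phi r ! (p - tsize l - 1) \<le> tsize r"
  using set_phi[of r] nth_mem[of "p - tsize l - 1" "phi r"] by auto

lemma phi_avoid132: "\<not> contains (phi t) [1,3,2]"
proof (induction t)
  case Leaf then show ?case unfolding contains132 by simp
next
  case (Node l r)
  show ?case
  proof
    assume "contains (phi (Node l r)) [1,3,2]"
    then obtain i j k where ijk: "i < j" "j < k" "k < tsize l + tsize r + 1"
      "phi (Node l r) ! i < phi (Node l r) ! k" "phi (Node l r) ! k < phi (Node l r) ! j"
      unfolding contains132 by auto
    let ?a = "tsize l" and ?b = "tsize r"
    consider "k < ?a" | "k = ?a" | "k > ?a" by arith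
    then show False
    proof cases
      case 1
      then have "phi l ! i < phi l ! k" "phi l ! k < phi l ! j"
        using ijk phi_nth_l[of _ l r] by auto
      then have "contains (phi l) [1,3,2]" unfolding contains132 using 1 ijk
        by (intro exI[of _ i] exI[of _ j] exI[of _ k]) auto
      then show False using Node.IH(1) by simp
    next
      case 2
      have "phi (Node l r) ! j \<le> ?a + ?b + 1"
        using set_phi[of "Node l r"] nth_mem[of j "phi (Node l r)"] ijk by auto
      then show False using ijk 2 phi_nth_a[of l r] by simp
    next
      case 3
      have rk: "phi (Node l r) ! k \<le> ?b"
        using phi_nth_r[of l k r] phi_r_range[of l k r] 3 ijk by auto
      consider "i < ?a" | "i = ?a" | "i > ?a" by arith
      then show False
      proof cases
        case 1 then show False using phi_nth_l[of i l r] rk ijk by auto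
      next
        case 2 then show False using phi_nth_a[of l r] rk ijk by auto
      next
        case i3: 3
        have "phi r ! (i - ?a - 1) < phi r ! (k - ?a - 1)" "phi r ! (k - ?a - 1) < phi r ! (j - ?a - 1)"
          using ijk phi_nth_r[of l _ r] i3 by auto
        moreover have "i - ?a - 1 < j - ?a - 1" "j - ?a - 1 < k - ?a - 1" "k - ?a - 1 < ?b"
          using ijk i3 by auto
        ultimately have "contains (phi r) [1,3,2]" unfolding contains132
          by (intro exI[of _ "i - ?a - 1"] exI[of _ "j - ?a - 1"] exI[of _ "k - ?a - 1"]) auto
        then show False using Node.IH(2) by simp
      qed
    qed
  qed
qed

lemma phi_inj: "phi t1 = phi t2 \<Longrightarrow> t1 = t2"
proof (induction t1 arbitrary: t2)
  case Leaf then show ?case by (cases t2) auto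
next
  case (Node l r)
  show ?case
  proof (cases t2)
    case Leaf then show ?thesis using Node.prems by simp
  next
    case (Node l' r')
    have len: "tsize l + tsize r = tsize l' + tsize r'"
      using Node.prems \<open>t2 = Node l' r'\<close> length_phi[of "Node l r"] length_phi[of "Node l' r'"] by simp
    let ?p = "phi (Node l r)"
    have d: "distinct ?p" by (rule distinct_phi)
    have "?p ! tsize l = tsize l + tsize r + 1" by (rule phi_nth_a)
    moreover have "?p ! tsize l' = tsize l + tsize r + 1"
      using phi_nth_a[of l' r'] Node.prems \<open>t2 = Node l' r'\<close> len by simp
    moreover have "tsize l < length ?p" "tsize l' < length ?p" using len by auto
    ultimately have la: "tsize l = tsize l'" using d nth_eq_iff_index_eq by metis
    then have lb: "tsize r = tsize r'" using len by simp
    have "map (\<lambda>x. x + tsize r) (phi l) = map (\<lambda>x. x + tsize r) (phi l') \<and> phi r = phi r'"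
      using Node.prems \<open>t2 = Node l' r'\<close> la lb by simp
    then have "phi l = phi l'" "phi r = phi r'"
      using inj_map_eq_map[of "\<lambda>x. x + tsize r"] by (auto simp: inj_def)
    then show ?thesis using Node.IH \<open>t2 = Node l' r'\<close> by simp
  qed
qed


lemma down_closed:
  assumes "finite D" "\<forall>y\<in>D. 1 \<le> y" "\<forall>y\<in>D. \<forall>x. 1 \<le> x \<longrightarrow> x \<le> y \<longrightarrow> x \<in> D"
  shows "D = {1..card D}"
proof (cases "D = {}")
  case True then show ?thesis by simp
next
  case False
  have e: "D = {1..Max D}"
  proof
    show "D \<subseteq> {1..Max D}" using assms(2) Max_ge[OF assms(1)] by auto
    show "{1..Max D} \<subseteq> D"
    proof
      fix x assume "x \<in> {1..Max D}"
      then show "x \<in> D" using assms(3) Max_in[OF assms(1) False] by auto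
    qed
  qed
  have c: "card D = Max D" by (subst e) simp
  show ?thesis by (simp only: c) (rule e)
qed

lemma phi_surj: "is_perm n \<pi> \<Longrightarrow> \<not> contains \<pi> [1,3,2] \<Longrightarrow> \<exists>t. tsize t = n \<and> phi t = \<pi>"
proof (induction n arbitrary: \<pi> rule: less_induct)
  case (less n)
  have dist: "distinct \<pi>" and setp: "set \<pi> = {1..n}" using less.prems by (auto simp: is_perm_def)
  have len: "length \<pi> = n" using distinct_card[OF dist] setp by simp
  show ?case
  proof (cases "n = 0")
    case True then show ?thesis using len by (intro exI[of _ Leaf]) simp
  next
    case False
    then have "n \<in> set \<pi>" using setp by simp
    then obtain p where p: "p < n" "\<pi> ! p = n" using len by (auto simp: in_set_conv_nth)
    define \<alpha>0 where "\<alpha>0 = take p \<pi>"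
    define \<beta> where "\<beta> = drop (Suc p) \<pi>"
    define b where "b = length \<beta>"
    have dec: "\<pi> = \<alpha>0 @ n # \<beta>"
      unfolding \<alpha>0_def \<beta>_def using id_take_nth_drop[of p \<pi>] p len by simp
    have la: "length \<alpha>0 = p" using p len by (simp add: \<alpha>0_def)
    have lb: "b = n - p - 1" using p len by (simp add: b_def \<beta>_def)
    have nth\<alpha>: "\<And>i. i < p \<Longrightarrow> \<alpha>0 ! i = \<pi> ! i" by (simp add: \<alpha>0_def)
    have nth\<beta>: "\<And>i. i < b \<Longrightarrow> \<beta> ! i = \<pi> ! (Suc p + i)" using p len by (simp add: \<beta>_def b_def)
    have d2: "distinct (\<alpha>0 @ n # \<beta>)" using dist dec by simp
    have key: "\<forall>x\<in>set \<alpha>0. \<forall>y\<in>set \<beta>. y < x"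
    proof (intro ballI, rule ccontr)
      fix x y assume x: "x \<in> set \<alpha>0" and y: "y \<in> set \<beta>" and "\<not> y < x"
      obtain i where i: "i < p" "x = \<pi> ! i" using x la nth\<alpha> by (auto simp: in_set_conv_nth)
      obtain j where j: "j < b" "y = \<pi> ! (Suc p + j)" using y nth\<beta> by (auto simp: in_set_conv_nth b_def)
      have "x \<noteq> y" using x y d2 by auto
      then have xy: "x < y" using \<open>\<not> y < x\<close> by simp
      have "y \<in> set \<pi>" using y dec by simp
      moreover have "y \<noteq> n" using y d2 by auto
      ultimately have "y < n" using setp by auto
      moreover have "Suc p + j < length \<pi>" using j lb len p by simp
      ultimately have "contains \<pi> [1,3,2]" unfolding contains132
        using i j xy p by (intro exI[of _ i] exI[of _ p] exI[of _ "Suc p + j"]) auto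
      then show False using less.prems by simp
    qed
    have setall: "set \<alpha>0 \<union> {n} \<union> set \<beta> = {1..n}" using setp dec by auto
    have db: "distinct \<beta>" and da: "distinct \<alpha>0" and nn: "n \<notin> set \<alpha>0" "n \<notin> set \<beta>"
      and disj: "set \<alpha>0 \<inter> set \<beta> = {}" using d2 by auto
    have setb: "set \<beta> = {1..b}"
    proof -
      have "set \<beta> = {1..card (set \<beta>)}"
      proof (rule down_closed)
        show "\<forall>y\<in>set \<beta>. 1 \<le> y" using setall by auto
        show "\<forall>y\<in>set \<beta>. \<forall>x. 1 \<le> x \<longrightarrow> x \<le> y \<longrightarrow> x \<in> set \<beta>"
        proof (intro ballI allI impI)
          fix y x assume y: "y \<in> set \<beta>" and x: "1 \<le> x" "x \<le> y"
          have "y \<le> n" "y \<noteq> n" using y setall nn by auto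
          then have "x \<in> {1..n}" "x \<noteq> n" using x by auto
          then have "x \<in> set \<alpha>0 \<or> x \<in> set \<beta>" using setall by blast
          moreover have "x \<in> set \<alpha>0 \<Longrightarrow> y < x" using key y by blast
          ultimately show "x \<in> set \<beta>" using x by linarith
        qed
      qed simp
      then show ?thesis using distinct_card[OF db] by (simp add: b_def)
    qed
    have seta: "set \<alpha>0 = {b+1..n-1}"
    proof
      show "set \<alpha>0 \<subseteq> {b+1..n-1}"
      proof
        fix x assume x: "x \<in> set \<alpha>0"
        then have "x \<in> {1..n}" "x \<noteq> n" "x \<notin> {1..b}" using setall nn disj setb by auto
        then show "x \<in> {b+1..n-1}" by auto
      qed
      show "{b+1..n-1} \<subseteq> set \<alpha>0"
      proof
        fix x assume x: "x \<in> {b+1..n-1}"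
        then have "x \<in> {1..n}" "x \<noteq> n" "x \<notin> set \<beta>" using setb by auto
        then show "x \<in> set \<alpha>0" using setall by blast
      qed
    qed
    define \<alpha> where "\<alpha> = map (\<lambda>x. x - b) \<alpha>0"
    have gt: "\<And>x. x \<in> set \<alpha>0 \<Longrightarrow> b < x" using seta by auto
    have "inj_on (\<lambda>x. x - b) (set \<alpha>0)"
    proof (rule inj_onI)
      fix x y assume "x \<in> set \<alpha>0" "y \<in> set \<alpha>0" "x - b = y - b"
      then show "x = y" using gt[of x] gt[of y] by linarith
    qed
    then have "distinct \<alpha>" using da by (simp add: \<alpha>_def distinct_map)
    moreover have "set \<alpha> = {1..p}"
    proof -
      have "(\<lambda>x. x - b) ` {b+1..n-1} = {1..n-1-b}"
        by (auto simp: image_iff intro!: bexI[of _ "_ + b"])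
      then show ?thesis using lb p by (simp add: \<alpha>_def seta)
    qed
    ultimately have perm\<alpha>: "is_perm p \<alpha>" by (simp add: is_perm_def)
    have av\<alpha>: "\<not> contains \<alpha> [1,3,2]"
    proof
      assume "contains \<alpha> [1,3,2]"
      then obtain i j k where ijk: "i < j" "j < k" "k < p" "\<alpha> ! i < \<alpha> ! k" "\<alpha> ! k < \<alpha> ! j"
        unfolding contains132 using la by (auto simp: \<alpha>_def)
      have q: "\<alpha> ! q + b = \<pi> ! q" if "q < p" for q
      proof -
        have "\<alpha>0 ! q \<in> set \<alpha>0" using that la by simp
        then have "b < \<alpha>0 ! q" by (rule gt)
        then show ?thesis using that la nth\<alpha>[OF that] by (simp add: \<alpha>_def)
      qed
      have "\<pi> ! i < \<pi> ! k" "\<pi> ! k < \<pi> ! j"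
        using q[of i] q[of j] q[of k] ijk by simp_all
      then have "contains \<pi> [1,3,2]" unfolding contains132 using ijk p len
        by (intro exI[of _ i] exI[of _ j] exI[of _ k]) auto
      then show False using less.prems by simp
    qed
    have perm\<beta>: "is_perm b \<beta>" using db setb by (simp add: is_perm_def)
    have av\<beta>: "\<not> contains \<beta> [1,3,2]"
    proof
      assume "contains \<beta> [1,3,2]"
      then obtain i j k where ijk: "i < j" "j < k" "k < b" "\<beta> ! i < \<beta> ! k" "\<beta> ! k < \<beta> ! j"
        unfolding contains132 by (auto simp: b_def)
      then have "\<pi> ! (Suc p + i) < \<pi> ! (Suc p + k)" "\<pi> ! (Suc p + k) < \<pi> ! (Suc p + j)"
        using nth\<beta> by auto
      then have "contains \<pi> [1,3,2]" unfolding contains132 using ijk p len lb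
        by (intro exI[of _ "Suc p + i"] exI[of _ "Suc p + j"] exI[of _ "Suc p + k"]) auto
      then show False using less.prems by simp
    qed
    have "p < n" "b < n" using p lb by auto
    obtain tl where tl: "tsize tl = p" "phi tl = \<alpha>"
      using less.IH[OF \<open>p < n\<close> perm\<alpha> av\<alpha>] by blast
    obtain tr where tr: "tsize tr = b" "phi tr = \<beta>"
      using less.IH[OF \<open>b < n\<close> perm\<beta> av\<beta>] by blast
    have "map (\<lambda>x. x + b) \<alpha> = \<alpha>0"
      unfolding \<alpha>_def map_map
    proof (rule map_idI)
      fix x assume "x \<in> set \<alpha>0" then have "b < x" by (rule gt)
      then show "((\<lambda>x. x + b) \<circ> (\<lambda>x. x - b)) x = x" by simp
    qed
    moreover have "p + b + 1 = n" using lb p by simp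
    ultimately have "phi (Node tl tr) = \<pi>" using tl tr dec by simp
    moreover have "tsize (Node tl tr) = n" using tl tr lb p by simp
    ultimately show ?thesis by blast
  qed
qed

lemma phi_bij: "bij_betw phi (T n) (Av_n n [1,3,2])"
proof (rule bij_betwI')
  show "\<And>x y. x \<in> T n \<Longrightarrow> y \<in> T n \<Longrightarrow> (phi x = phi y) = (x = y)" using phi_inj by blast
  show "\<And>x. x \<in> T n \<Longrightarrow> phi x \<in> Av_n n [1, 3, 2]"
    using is_perm_phi phi_avoid132 by (auto simp: T_def Av_n_def)
  show "\<And>y. y \<in> Av_n n [1, 3, 2] \<Longrightarrow> \<exists>x\<in>T n. y = phi x"
    using phi_surj by (fastforce simp: T_def Av_n_def)
qed


declare phi.simps(2)[simp del]

lemma phi_nth_bound: "p < tsize t \<Longrightarrow> 1 \<le> phi t ! p \<and> phi t ! p \<le> tsize t"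
  using set_phi[of t] nth_mem[of p "phi t"] by auto

lemma rpos_l:
  assumes i: "i < tsize l"
  shows "r_pos (phi (Node l r)) i = r_pos (phi l) i"
proof (intro set_eqI iffI)
  let ?p = "phi (Node l r)" and ?a = "tsize l" and ?b = "tsize r"
  have pi: "?p ! i = phi l ! i + ?b" using phi_nth_l[OF i] .
  have pib: "?p ! i < ?a + ?b + 1" using pi phi_l_range[OF i] by simp
  fix k
  assume "k \<in> r_pos ?p i"
  then have k: "k < ?a + ?b + 1" "?p ! k \<le> ?p ! i"
     and H: "\<And>j. min k i < j \<Longrightarrow> j < max k i \<Longrightarrow> ?p ! j \<le> ?p ! i"
    by (auto simp: r_pos_def)
  have ka: "k < ?a"
  proof (rule ccontr)
    assume "\<not> k < ?a"
    then consider "k = ?a" | "k > ?a" by arith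
    then show False
    proof cases
      case 1 then show False using k pib phi_nth_a[of l r] by simp
    next
      case 2 then have "?p ! ?a \<le> ?p ! i" using H[of ?a] i by simp
      then show False using pib phi_nth_a[of l r] by simp
    qed
  qed
  show "k \<in> r_pos (phi l) i"
    unfolding r_pos_def
  proof (intro CollectI conjI allI impI)
    show "k < length (phi l)" using ka by simp
    show "phi l ! k \<le> phi l ! i" using k(2) pi phi_nth_l[OF ka] by simp
    fix j assume j: "min k i < j \<and> j < max k i"
    then have "j < ?a" using ka i by (auto simp: max_def split: if_splits)
    then show "phi l ! j \<le> phi l ! i" using H[of j] j pi phi_nth_l[of j l r] by simp
  qed
next
  let ?p = "phi (Node l r)" and ?a = "tsize l" and ?b = "tsize r"
  have pi: "?p ! i = phi l ! i + ?b" using phi_nth_l[OF i] .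
  fix k
  assume "k \<in> r_pos (phi l) i"
  then have k: "k < ?a" "phi l ! k \<le> phi l ! i"
     and H: "\<And>j. min k i < j \<Longrightarrow> j < max k i \<Longrightarrow> phi l ! j \<le> phi l ! i"
    by (auto simp: r_pos_def)
  show "k \<in> r_pos ?p i"
    unfolding r_pos_def
  proof (intro CollectI conjI allI impI)
    show "k < length ?p" using k by simp
    show "?p ! k \<le> ?p ! i" using k pi phi_nth_l[of k l r] by simp
    fix j assume j: "min k i < j \<and> j < max k i"
    then have "j < ?a" using k i by (auto simp: max_def split: if_splits)
    then show "?p ! j \<le> ?p ! i" using H[of j] j pi phi_nth_l[of j l r] by simp
  qed
qed

lemma rpos_a: "r_pos (phi (Node l r)) (tsize l) = {..<tsize l + tsize r + 1}"
proof -
  have "\<And>k. k < tsize (Node l r) \<Longrightarrow> phi (Node l r) ! k \<le> tsize l + tsize r + 1"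
    using phi_nth_bound[of _ "Node l r"] by simp
  then show ?thesis by (auto simp: r_pos_def phi_nth_a)
qed

lemma rpos_r:
  assumes i: "tsize l < i" "i < tsize l + tsize r + 1"
  shows "r_pos (phi (Node l r)) i = (+) (tsize l + 1) ` r_pos (phi r) (i - tsize l - 1)"
proof (intro set_eqI iffI)
  let ?p = "phi (Node l r)" and ?a = "tsize l" and ?b = "tsize r"
  let ?i = "i - ?a - 1"
  have pi: "?p ! i = phi r ! ?i" using phi_nth_r[OF i(1)] .
  have pib: "?p ! i \<le> ?b" using pi phi_r_range[OF i] by simp
  fix k
  assume "k \<in> r_pos ?p i"
  then have k: "k < ?a + ?b + 1" "?p ! k \<le> ?p ! i"
     and H: "\<And>j. min k i < j \<Longrightarrow> j < max k i \<Longrightarrow> ?p ! j \<le> ?p ! i"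
    by (auto simp: r_pos_def)
  have ka: "k > ?a"
  proof (rule ccontr)
    assume "\<not> k > ?a"
    then consider "k = ?a" | "k < ?a" by arith
    then show False
    proof cases
      case 1 then show False using k pib phi_nth_a[of l r] by simp
    next
      case 2 then have "?p ! ?a \<le> ?p ! i" using H[of ?a] i by simp
      then show False using pib phi_nth_a[of l r] by simp
    qed
  qed
  let ?k = "k - ?a - 1"
  have "?k \<in> r_pos (phi r) ?i"
    unfolding r_pos_def
  proof (intro CollectI conjI allI impI)
    show "?k < length (phi r)" using ka k by simp
    show "phi r ! ?k \<le> phi r ! ?i" using k(2) pi phi_nth_r[OF ka] by simp
    fix j assume j: "min ?k ?i < j \<and> j < max ?k ?i"
    then have "min k i < j + ?a + 1" "j + ?a + 1 < max k i" using ka i by auto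
    then have "?p ! (j + ?a + 1) \<le> ?p ! i" using H by blast
    then show "phi r ! j \<le> phi r ! ?i" using pi phi_nth_r[of l "j + ?a + 1" r] by simp
  qed
  moreover have "k = ?a + 1 + ?k" using ka by simp
  ultimately show "k \<in> (+) (?a + 1) ` r_pos (phi r) ?i" by (metis image_eqI)
next
  let ?p = "phi (Node l r)" and ?a = "tsize l" and ?b = "tsize r"
  let ?i = "i - ?a - 1"
  have pi: "?p ! i = phi r ! ?i" using phi_nth_r[OF i(1)] .
  fix k
  assume "k \<in> (+) (?a + 1) ` r_pos (phi r) ?i"
  then obtain k' where kk: "k = ?a + 1 + k'" and "k' \<in> r_pos (phi r) ?i" by blast
  then have k: "k' < ?b" "phi r ! k' \<le> phi r ! ?i"
     and H: "\<And>j. min k' ?i < j \<Longrightarrow> j < max k' ?i \<Longrightarrow> phi r ! j \<le> phi r ! ?i"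
    by (auto simp: r_pos_def)
  have pk: "?p ! k = phi r ! k'" using phi_nth_r[of l k r] kk by simp
  show "k \<in> r_pos ?p i"
    unfolding r_pos_def
  proof (intro CollectI conjI allI impI)
    show "k < length ?p" using k kk by simp
    show "?p ! k \<le> ?p ! i" using k pi pk by simp
    fix j assume j: "min k i < j \<and> j < max k i"
    then have ja: "j > ?a" using kk i by auto
    then have "min k' ?i < j - ?a - 1" "j - ?a - 1 < max k' ?i" using j kk i by auto
    then have "phi r ! (j - ?a - 1) \<le> phi r ! ?i" using H by blast
    then show "?p ! j \<le> ?p ! i" using pi phi_nth_r[OF ja] by simp
  qed
qed

lemma std_shift: "standardize (map (\<lambda>x. x + c) xs) = standardize xs"
proof -
  have "card {y \<in> set (map (\<lambda>x. x + c) xs). y \<le> x + c} = card {y \<in> set xs. y \<le> x}" for x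
  proof -
    have "{y \<in> set (map (\<lambda>x. x + c) xs). y \<le> x + c} = (\<lambda>x. x + c) ` {y \<in> set xs. y \<le> x}" by auto
    then show ?thesis by (simp add: card_image inj_on_def)
  qed
  then show ?thesis by (simp add: standardize_def)
qed

lemma std_perm: "is_perm n xs \<Longrightarrow> standardize xs = xs"
  unfolding standardize_def
proof (rule map_idI)
  fix x assume "is_perm n xs" "x \<in> set xs"
  then have "set xs = {1..n}" "x \<in> {1..n}" by (auto simp: is_perm_def)
  then have "{y \<in> set xs. y \<le> x} = {1..x}" by auto
  then show "card {y \<in> set xs. y \<le> x} = x" by simp
qed

lemma rtilde_l: "i < tsize l \<Longrightarrow> r_tilde (phi (Node l r)) i = r_tilde (phi l) i"
proof -
  assume i: "i < tsize l"
  let ?I = "r_pos (phi l) i"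
  have sub: "?I \<subseteq> {..<tsize l}" by (auto simp: r_pos_def)
  have "nths (phi (Node l r)) ?I = map (\<lambda>x. x + tsize r) (nths (phi l) ?I)"
  proof -
    have "{j. j + tsize l \<in> ?I} = {}" using sub by auto
    then show ?thesis by (simp add: nths_append nths_map phi.simps(2))
  qed
  then show ?thesis by (simp add: r_tilde_def rpos_l[OF i] std_shift)
qed

lemma rtilde_a: "r_tilde (phi (Node l r)) (tsize l) = phi (Node l r)"
proof -
  have "nths (phi (Node l r)) {..<tsize l + tsize r + 1} = phi (Node l r)"
    by (simp only: nths_upt_eq_take) simp
  then show ?thesis using std_perm[OF is_perm_phi[of "Node l r"]]
    by (simp only: r_tilde_def rpos_a)
qed

lemma rtilde_r: "tsize l < i \<Longrightarrow> i < tsize l + tsize r + 1 \<Longrightarrow>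
   r_tilde (phi (Node l r)) i = r_tilde (phi r) (i - tsize l - 1)"
proof -
  assume i: "tsize l < i" "i < tsize l + tsize r + 1"
  have "drop (tsize l + 1) (phi (Node l r)) = phi r" by (simp add: phi.simps(2))
  then have "nths (phi (Node l r)) ((+) (tsize l + 1) ` r_pos (phi r) (i - tsize l - 1))
     = nths (phi r) (r_pos (phi r) (i - tsize l - 1))"
    by (metis nths_drop)
  then show ?thesis by (simp add: r_tilde_def rpos_r[OF i])
qed

definition Rset :: "nat list \<Rightarrow> nat list set" where
  "Rset p = r_tilde p ` {..<length p}"

lemma Rset_Node: "Rset (phi (Node l r)) = Rset (phi l) \<union> {phi (Node l r)} \<union> Rset (phi r)"
proof -
  let ?p = "phi (Node l r)" and ?a = "tsize l" and ?b = "tsize r"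
  have U: "{..<?a + ?b + 1} = {..<?a} \<union> {?a} \<union> {?a<..<?a + ?b + 1}" by auto
  have 1: "r_tilde ?p ` {..<?a} = r_tilde (phi l) ` {..<?a}"
    by (rule image_cong) (auto simp: rtilde_l)
  have 3: "r_tilde ?p ` {?a<..<?a + ?b + 1} = r_tilde (phi r) ` {..<?b}"
  proof
    show "r_tilde ?p ` {?a<..<?a + ?b + 1} \<subseteq> r_tilde (phi r) ` {..<?b}"
      using rtilde_r[of l _ r] by force
    show "r_tilde (phi r) ` {..<?b} \<subseteq> r_tilde ?p ` {?a<..<?a + ?b + 1}"
    proof
      fix x assume "x \<in> r_tilde (phi r) ` {..<?b}"
      then obtain j where j: "j < ?b" "x = r_tilde (phi r) j" by auto
      then have "x = r_tilde ?p (j + ?a + 1)" using rtilde_r[of l "j + ?a + 1" r] by simp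
      moreover have "j + ?a + 1 \<in> {?a<..<?a + ?b + 1}" using j by simp
      ultimately show "x \<in> r_tilde ?p ` {?a<..<?a + ?b + 1}" by blast
    qed
  qed
  show ?thesis unfolding Rset_def length_phi tsize.simps U image_Un 1 3
    by (simp add: rtilde_a)
qed

lemma M_alt: "M p = Max (insert 0 (length ` (Av [2,3,1] \<inter> Rset p)))"
proof -
  have "{length \<tau> | \<tau>. \<tau> \<in> Av [2,3,1] \<and> (\<exists>i<length p. \<tau> = r_tilde p i)} = length ` (Av [2,3,1] \<inter> Rset p)"
    by (auto simp: Rset_def)
  then show ?thesis by (simp add: M_def)
qed

lemma Max_ins0_Un: "finite X \<Longrightarrow> finite Y \<Longrightarrow>
   Max (insert (0::nat) (X \<union> Y)) = max (Max (insert 0 X)) (Max (insert 0 Y))"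
proof -
  assume "finite X" "finite Y"
  have "insert (0::nat) (X \<union> Y) = insert 0 X \<union> insert 0 Y" by auto
  then show ?thesis using \<open>finite X\<close> \<open>finite Y\<close> by (simp only:) (rule Max.union, auto)
qed

lemma in_Av231: "is_perm n p \<Longrightarrow> p \<in> Av [2,3,1] \<longleftrightarrow> \<not> contains p [2,3,1]"
  by (auto simp: Av_def Av_n_def)

lemma c231_Node: "contains (phi (Node l r)) [2,3,1] \<longleftrightarrow>
   (l \<noteq> Leaf \<and> r \<noteq> Leaf) \<or> contains (phi l) [2,3,1] \<or> contains (phi r) [2,3,1]"
proof
  let ?p = "phi (Node l r)" and ?a = "tsize l" and ?b = "tsize r"
  assume "contains ?p [2,3,1]"
  then obtain i j k where ijk: "i < j" "j < k" "k < ?a + ?b + 1" "?p ! k < ?p ! i" "?p ! i < ?p ! j"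
    unfolding contains231 by auto
  have pj: "?p ! j \<le> ?a + ?b + 1" using phi_nth_bound[of j "Node l r"] ijk by simp
  show "(l \<noteq> Leaf \<and> r \<noteq> Leaf) \<or> contains (phi l) [2,3,1] \<or> contains (phi r) [2,3,1]"
  proof (cases "l = Leaf")
    case True
    then have a0: "?a = 0" by simp
    have "i \<noteq> 0"
    proof
      assume "i = 0"
      then have "?p ! i = ?a + ?b + 1" using phi_nth_a[of l r] a0 by simp
      then show False using ijk pj by simp
    qed
    then have "?a < i" using a0 by simp
    then have "phi r ! (k - ?a - 1) < phi r ! (i - ?a - 1)" "phi r ! (i - ?a - 1) < phi r ! (j - ?a - 1)"
      using ijk phi_nth_r[of l _ r] by auto
    moreover have "i - ?a - 1 < j - ?a - 1" "j - ?a - 1 < k - ?a - 1" "k - ?a - 1 < length (phi r)"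
      using ijk \<open>?a < i\<close> by auto
    ultimately have "contains (phi r) [2,3,1]" unfolding contains231
      by (intro exI[of _ "i - ?a - 1"] exI[of _ "j - ?a - 1"] exI[of _ "k - ?a - 1"]) auto
    then show ?thesis by simp
  next
    case False
    show ?thesis
    proof (cases "r = Leaf")
      case True
      then have b0: "?b = 0" by simp
      have pi: "?p ! i \<le> ?a + ?b + 1" using phi_nth_bound[of i "Node l r"] ijk by simp
      have "k \<noteq> ?a" using ijk pi phi_nth_a[of l r] by auto
      then have "k < ?a" using ijk b0 by simp
      then have "phi l ! k < phi l ! i" "phi l ! i < phi l ! j"
        using ijk phi_nth_l[of _ l r] by auto
      then have "contains (phi l) [2,3,1]" unfolding contains231 using ijk \<open>k < ?a\<close>
        by (intro exI[of _ i] exI[of _ j] exI[of _ k]) auto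
      then show ?thesis by simp
    next
      case False
      then show ?thesis using \<open>l \<noteq> Leaf\<close> by simp
    qed
  qed
next
  let ?p = "phi (Node l r)" and ?a = "tsize l" and ?b = "tsize r"
  assume "(l \<noteq> Leaf \<and> r \<noteq> Leaf) \<or> contains (phi l) [2,3,1] \<or> contains (phi r) [2,3,1]"
  then consider "l \<noteq> Leaf" "r \<noteq> Leaf" | "contains (phi l) [2,3,1]" | "contains (phi r) [2,3,1]" by blast
  then show "contains ?p [2,3,1]"
  proof cases
    case 1
    have a: "?a \<ge> 1" "?b \<ge> 1" using 1 by (cases l; simp; cases r; simp)+
    have "?p ! 0 = phi l ! 0 + ?b" using phi_nth_l[of 0 l r] a by simp
    moreover have "1 \<le> phi l ! 0" using phi_l_range[of 0 l] a by simp
    moreover have "?p ! (?a + 1) \<le> ?b" using phi_nth_r[of l "?a + 1" r] phi_r_range[of l "?a + 1" r] a by simp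
    moreover have "phi l ! 0 \<le> ?a" using phi_l_range[of 0 l] a by simp
    ultimately show ?thesis unfolding contains231 using a phi_nth_a[of l r]
      by (intro exI[of _ 0] exI[of _ ?a] exI[of _ "?a + 1"]) auto
  next
    case 2
    then obtain i j k where ijk: "i < j" "j < k" "k < ?a" "phi l ! k < phi l ! i" "phi l ! i < phi l ! j"
      unfolding contains231 by auto
    then show ?thesis unfolding contains231 using phi_nth_l[of _ l r]
      by (intro exI[of _ i] exI[of _ j] exI[of _ k]) auto
  next
    case 3
    then obtain i j k where ijk: "i < j" "j < k" "k < ?b" "phi r ! k < phi r ! i" "phi r ! i < phi r ! j"
      unfolding contains231 by auto
    then show ?thesis unfolding contains231 using phi_nth_r[of l _ r]
      by (intro exI[of _ "i + ?a + 1"] exI[of _ "j + ?a + 1"] exI[of _ "k + ?a + 1"]) auto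
  qed
qed

lemma path_phi: "path t \<longleftrightarrow> \<not> contains (phi t) [2,3,1]"
proof (induction t)
  case Leaf then show ?case unfolding contains231 by simp
next
  case (Node l r) then show ?case by (simp only: c231_Node path.simps) blast
qed

lemma finite_Rset: "finite (Rset p)" by (simp add: Rset_def)

lemma Max3: "finite X \<Longrightarrow> finite Y \<Longrightarrow> finite Z \<Longrightarrow>
  Max (insert (0::nat) (X \<union> (Y \<union> Z))) = max (Max (insert 0 X)) (max (Max (insert 0 Y)) (Max (insert 0 Z)))"
  by (simp add: Max_ins0_Un)

lemma M_phi: "M (phi t) = mt t"
proof (induction t)
  case Leaf then show ?case by (simp add: M_alt Rset_def)
next
  case (Node l r)
  let ?p = "phi (Node l r)"
  let ?A = "length ` (Av [2,3,1] \<inter> Rset (phi l))"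
  let ?B = "length ` (Av [2,3,1] \<inter> {?p})"
  let ?C = "length ` (Av [2,3,1] \<inter> Rset (phi r))"
  have e: "length ` (Av [2,3,1] \<inter> Rset ?p) = ?A \<union> (?B \<union> ?C)"
    unfolding Rset_Node by blast
  have s: "Max (insert 0 ?B) = (if path (Node l r) then tsize (Node l r) else 0)"
  proof -
    have "?p \<in> Av [2,3,1] \<longleftrightarrow> path (Node l r)"
      using in_Av231[OF is_perm_phi] path_phi by blast
    then show ?thesis by auto
  qed
  have "M ?p = max (Max (insert 0 ?A)) (max (Max (insert 0 ?B)) (Max (insert 0 ?C)))"
    unfolding M_alt e by (rule Max3) (simp_all add: finite_Rset)
  also have "\<dots> = max (mt l) (max (if path (Node l r) then tsize (Node l r) else 0) (mt r))"
    unfolding s using Node.IH by (simp add: M_alt)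
  also have "\<dots> = mt (Node l r)" by (simp only: mt.simps max.commute[of _ "mt r"])
  finally show ?case .
qed


lemma C_pos: "C j > 0"
proof (induction j)
  case 0 then show ?case by (simp add: C_0)
next
  case (Suc j)
  have "real (j + 2) * real (C (Suc j)) = real (4 * j + 2) * real (C j)" by (rule C_ratio)
  moreover have "real (4 * j + 2) * real (C j) > 0" using Suc by simp
  ultimately have "real (j + 2) * real (C (Suc j)) > 0" by simp
  then have "real (C (Suc j)) > 0" by (simp add: zero_less_mult_iff)
  then show ?case by simp
qed

lemma C_up: "real (C (Suc j)) \<le> 4 * real (C j)"
proof -
  have e: "real (j + 2) * real (C (Suc j)) = real (4 * j + 2) * real (C j)" by (rule C_ratio)
  have "real (4 * j + 2) \<le> real (j + 2) * 4" by simp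
  then have "real (4 * j + 2) * real (C j) \<le> (real (j + 2) * 4) * real (C j)"
    by (rule mult_right_mono) simp
  then have "real (4 * j + 2) * real (C j) \<le> real (j + 2) * (4 * real (C j))"
    by (simp only: mult.assoc)
  then have "real (j + 2) * real (C (Suc j)) \<le> real (j + 2) * (4 * real (C j))" using e by simp
  then show ?thesis by (rule mult_left_le_imp_le) simp
qed

lemma C_low: "m \<le> j \<Longrightarrow> (4 - 6 / (real m + 2)) * real (C j) \<le> real (C (Suc j))"
proof -
  assume mj: "m \<le> j"
  have e: "real (C (Suc j)) = (4 - 6 / (real j + 2)) * real (C j)"
    using C_ratio[of j] by (simp add: field_simps)
  have "6 / (real j + 2) \<le> 6 / (real m + 2)" using mj by (intro divide_left_mono) auto
  then show ?thesis unfolding e by (intro mult_right_mono) auto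
qed

lemma C_cube: "4 * (real j + 1)^3 * real (C j) \<le> (real j + 2)^3 * real (C (Suc j))"
proof -
  have e: "(real j + 2) * real (C (Suc j)) = (4 * real j + 2) * real (C j)"
    using C_ratio[of j] by (simp add: algebra_simps)
  have "4 * (real j + 1)^3 \<le> (real j + 2)^2 * (4 * real j + 2)"
    by (simp add: power2_eq_square power3_eq_cube algebra_simps)
  then have "4 * (real j + 1)^3 * real (C j) \<le> (real j + 2)^2 * (4 * real j + 2) * real (C j)"
    by (intro mult_right_mono) auto
  also have "\<dots> = (real j + 2)^2 * ((4 * real j + 2) * real (C j))" by (simp only: mult.assoc)
  also have "\<dots> = (real j + 2)^2 * ((real j + 2) * real (C (Suc j)))" by (simp only: e)
  also have "\<dots> = (real j + 2)^3 * real (C (Suc j))" by (simp add: power3_eq_cube power2_eq_square)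
  finally show ?thesis .
qed

lemma T1: "real (C (m + k)) \<le> 4^k * real (C m)"
proof (induction k)
  case (Suc k)
  have "real (C (m + Suc k)) \<le> 4 * real (C (m + k))" using C_up[of "m + k"] by simp
  also have "\<dots> \<le> 4 * (4^k * real (C m))" using Suc by simp
  finally show ?case by simp
qed simp

lemma T2: "4^k * (real m + 1)^3 * real (C m) \<le> (real (m + k) + 1)^3 * real (C (m + k))"
proof (induction k)
  case (Suc k)
  have "4^Suc k * (real m + 1)^3 * real (C m) = 4 * (4^k * (real m + 1)^3 * real (C m))" by simp
  also have "\<dots> \<le> 4 * ((real (m + k) + 1)^3 * real (C (m + k)))" using Suc by simp
  also have "\<dots> \<le> (real (m + k) + 2)^3 * real (C (Suc (m + k)))" using C_cube[of "m + k"] by simp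
  finally show ?case by (simp add: algebra_simps)
qed simp

lemma T3: "(4 - 6 / (real m + 2))^k * real (C m) \<le> real (C (m + k))"
proof (induction k)
  case (Suc k)
  have q: "4 - 6 / (real m + 2) \<ge> 0"
  proof -
    have "6 / (real m + 2) \<le> 3" by (simp add: field_simps)
    then show ?thesis by simp
  qed
  have "(4 - 6 / (real m + 2))^Suc k * real (C m) = (4 - 6 / (real m + 2)) * ((4 - 6 / (real m + 2))^k * real (C m))"
    by simp
  also have "\<dots> \<le> (4 - 6 / (real m + 2)) * real (C (m + k))" using Suc q by (intro mult_left_mono) auto
  also have "\<dots> \<le> real (C (Suc (m + k)))" by (rule C_low) simp
  finally show ?case by simp
qed simp


definition EMt :: "nat \<Rightarrow> real" where
  "EMt n = (\<Sum>t\<in>T n. real (mt t)) / real (C n)"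

lemma mt_upper_pt:
  assumes t: "t \<in> T n" and K: "1 \<le> K"
  shows "mt t \<le> (K - 1) + (\<Sum>k\<in>{K..n}. Nk k t)"
proof (cases "mt t < K")
  case True then show ?thesis by simp
next
  case False
  let ?s = "mt t"
  have sn: "?s \<le> n" using mt_le[of t] t by (simp add: T_def)
  have "(\<Sum>k\<in>{K..?s}. 1) \<le> (\<Sum>k\<in>{K..?s}. Nk k t)"
    by (rule sum_mono) (use mt_Nk K in auto)
  also have "\<dots> \<le> (\<Sum>k\<in>{K..n}. Nk k t)"
    by (rule sum_mono2) (use sn in auto)
  finally have "?s + 1 - K \<le> (\<Sum>k\<in>{K..n}. Nk k t)" by simp
  then show ?thesis using False by linarith
qed

lemma sum_upper:
  assumes K: "1 \<le> K"
  shows "(\<Sum>t\<in>T n. real (mt t)) \<le> real (K - 1) * real (C n) + (\<Sum>k\<in>{K..n}. real (Acl n k))"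
proof -
  have "(\<Sum>t\<in>T n. real (mt t)) \<le> (\<Sum>t\<in>T n. real (K - 1) + (\<Sum>k\<in>{K..n}. real (Nk k t)))"
  proof (rule sum_mono)
    fix t assume "t \<in> T n"
    from mt_upper_pt[OF this K] show "real (mt t) \<le> real (K - 1) + (\<Sum>k\<in>{K..n}. real (Nk k t))"
      by (metis of_nat_add of_nat_le_iff of_nat_sum)
  qed
  also have "\<dots> = real (K - 1) * real (C n) + (\<Sum>k\<in>{K..n}. real (Acl n k))"
    by (simp add: sum.distrib C_def sum.swap[of _ "{K..n}"] A_eq[symmetric] Asum_def)
  finally show ?thesis .
qed

lemma Acl_bound0:
  assumes k: "1 \<le> k" "k \<le> n"
  shows "real (Acl n k) * (4^k * (real (n - k) + 1)^2) \<le> 2^(k-1) * (real n + 1)^3 * real (C n)"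
proof -
  obtain m where n: "n = k + m" using k le_Suc_ex by blast
  have t2: "4^k * (real m + 1)^3 * real (C m) \<le> (real n + 1)^3 * real (C n)"
    using T2[of k m] n by (simp add: add.commute)
  have A: "real (Acl n k) = 2^(k-1) * (real m + 1) * real (C m)" using k by (simp add: Acl_def n algebra_simps)
  have "real (Acl n k) * (4^k * (real (n - k) + 1)^2) = 2^(k-1) * (4^k * (real m + 1)^3 * real (C m))"
  proof -
    have nk: "n - k = m" using n by simp
    show ?thesis unfolding A nk by (simp only: power2_eq_square power3_eq_cube mult_ac)
  qed
  also have "\<dots> \<le> 2^(k-1) * ((real n + 1)^3 * real (C n))"
    using t2 by (intro mult_left_mono) auto
  finally show ?thesis by (simp add: mult.assoc)
qed

lemma Acl_over_C:
  assumes k: "1 \<le> k" "k \<le> n"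
  shows "real (Acl n k) / real (C n) \<le> 2 * (real n + 1) * (1/2)^k + (real n + 1)^3 / 2 powr ((real n + 1) / 2)"
proof -
  let ?d = "real (n - k) + 1"
  have dpos: "?d > 0" by simp
  have Cp: "real (C n) > 0" using C_pos by simp
  have p4: "(4::real)^k = 2^k * 2^k" by (simp flip: power_mult_distrib)
  have p2: "(2::real)^k = 2 * 2^(k-1)" using k by (simp flip: power_Suc)
  have "real (Acl n k) * (2 * 2^k * ?d^2) \<le> (real n + 1)^3 * real (C n)"
  proof -
    have "real (Acl n k) * (4^k * ?d^2) \<le> 2^(k-1) * (real n + 1)^3 * real (C n)"
      by (rule Acl_bound0[OF k])
    then have "real (Acl n k) * (2^(k-1) * (2 * 2^k * ?d^2)) \<le> 2^(k-1) * ((real n + 1)^3 * real (C n))"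
      unfolding p4 by (subst (asm) p2) (simp add: ac_simps)
    then have "2^(k-1) * (real (Acl n k) * (2 * 2^k * ?d^2)) \<le> 2^(k-1) * ((real n + 1)^3 * real (C n))"
      by (simp add: ac_simps)
    then show ?thesis by (rule mult_left_le_imp_le) simp
  qed
  then have main: "real (Acl n k) / real (C n) \<le> (real n + 1)^3 / (2 * 2^k * ?d^2)"
    using Cp dpos by (simp add: field_simps)
  show ?thesis
  proof (cases "2 * k \<le> n + 1")
    case True
    then have "real n + 1 \<le> 2 * ?d" using k by (simp add: of_nat_diff)
    then have "(real n + 1)^2 \<le> (2 * ?d)^2" by (intro power_mono) auto
    have "(real n + 1)^3 = (real n + 1) * (real n + 1)^2" by (simp add: power2_eq_square power3_eq_cube)
    also have "\<dots> \<le> (real n + 1) * (2 * ?d)^2" by (rule mult_left_mono) (use \<open>(real n + 1)^2 \<le> (2 * ?d)^2\<close> in auto)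
    also have "\<dots> = (real n + 1) * (4 * ?d^2)" by (simp add: power2_eq_square algebra_simps)
    finally have "(real n + 1)^3 \<le> (real n + 1) * (4 * ?d^2)" .
    then have "(real n + 1)^3 / (2 * 2^k * ?d^2) \<le> (real n + 1) * (4 * ?d^2) / (2 * 2^k * ?d^2)"
      by (intro divide_right_mono) auto
    also have "\<dots> = 2 * (real n + 1) * (1/2)^k" using dpos by (simp add: field_simps)
    finally have "(real n + 1)^3 / (2 * 2^k * ?d^2) \<le> 2 * (real n + 1) * (1/2)^k" .
    moreover have "0 \<le> (real n + 1)^3 / 2 powr ((real n + 1) / 2)" by simp
    ultimately show ?thesis using main by linarith
  next
    case False
    have "?d \<ge> 1" by simp
    then have d2: "1 \<le> ?d^2" by (simp add: one_le_power)
    have d3: "1 \<le> 2 * ?d^2" using d2 by linarith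
    have "(2::real)^k * 1 \<le> 2^k * (2 * ?d^2)" by (rule mult_left_mono[OF d3]) simp
    then have "(2::real)^k \<le> 2 * 2^k * ?d^2" by (simp add: ac_simps)
    then have "(real n + 1)^3 / (2 * 2^k * ?d^2) \<le> (real n + 1)^3 / 2^k"
      by (intro divide_left_mono) auto
    also have "\<dots> \<le> (real n + 1)^3 / 2 powr ((real n + 1) / 2)"
    proof (intro divide_left_mono)
      have "2 powr ((real n + 1) / 2) \<le> 2 powr (real k)" using False by (intro powr_mono) auto
      then show "2 powr ((real n + 1) / 2) \<le> 2^k" by (simp add: powr_realpow)
    qed auto
    finally have "(real n + 1)^3 / (2 * 2^k * ?d^2) \<le> (real n + 1)^3 / 2 powr ((real n + 1) / 2)" .
    moreover have "0 \<le> 2 * (real n + 1) * (1/2::real)^k" by simp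
    ultimately show ?thesis using main by linarith
  qed
qed

lemma geom_tail: "(\<Sum>k\<in>{K..n}. (1/2::real)^k) \<le> 2 * (1/2)^K"
proof -
  have "(\<Sum>k\<in>{K..n}. (1/2::real)^k) = (if n < K then 0 else ((1/2)^K - (1/2)^Suc n) / (1 - 1/2))"
    by (simp add: sum_gp)
  also have "\<dots> \<le> 2 * (1/2)^K" by auto
  finally show ?thesis .
qed

lemma EMt_upper:
  assumes n: "n \<ge> 2"
  shows "EMt n \<le> log 2 n + 8 + n * (n + 1)^3 / 2 powr ((n + 1) / 2)"
proof -
  define K where "K = nat \<lceil>log 2 n\<rceil>"
  have L0: "log 2 n > 0" using n by simp
  have "0 < \<lceil>log 2 (real n)\<rceil>" using L0 by simp
  then have "1 \<le> \<lceil>log 2 (real n)\<rceil>" by simp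
  from nat_mono[OF this] have K1: "1 \<le> K" by (simp add: K_def)
  have KL: "real K - 1 \<le> log 2 n" using L0 by (simp add: K_def)
  have KK: "real K = of_int \<lceil>log 2 (real n)\<rceil>" using L0 by (simp add: K_def)
  have "2 powr log 2 n \<le> 2 powr real K" by (intro powr_mono) (auto simp: KK)
  then have "real n \<le> 2^K" using n by (simp add: powr_realpow)
  then have hK: "(1/2::real)^K \<le> 1 / real n" using n by (simp add: field_simps power_one_over)
  have Cp: "real (C n) > 0" using C_pos by simp
  let ?E = "(real n + 1)^3 / 2 powr ((real n + 1) / 2)"
  have "(\<Sum>k\<in>{K..n}. real (Acl n k) / real (C n)) \<le> (\<Sum>k\<in>{K..n}. 2 * (real n + 1) * (1/2)^k + ?E)"
    by (rule sum_mono) (use Acl_over_C K1 in auto)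
  also have "\<dots> = 2 * (real n + 1) * (\<Sum>k\<in>{K..n}. (1/2)^k) + real (card {K..n}) * ?E"
    by (simp add: sum.distrib sum_distrib_left)
  also have "\<dots> \<le> 2 * (real n + 1) * (2 * (1 / real n)) + real n * ?E"
  proof (intro add_mono mult_left_mono mult_right_mono)
    show "(\<Sum>k\<in>{K..n}. (1/2::real)^k) \<le> 2 * (1 / real n)" using geom_tail[of K n] hK by simp
    show "real (card {K..n}) \<le> real n" using K1 by simp
  qed auto
  also have "\<dots> \<le> 8 + real n * ?E" using n by (simp add: field_simps)
  finally have S: "(\<Sum>k\<in>{K..n}. real (Acl n k) / real (C n)) \<le> 8 + real n * ?E" .
  have "EMt n \<le> (real (K - 1) * real (C n) + (\<Sum>k\<in>{K..n}. real (Acl n k))) / real (C n)"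
    unfolding EMt_def using sum_upper[OF K1, of n] Cp by (intro divide_right_mono) auto
  also have "\<dots> = real (K - 1) + (\<Sum>k\<in>{K..n}. real (Acl n k) / real (C n))"
    using Cp by (simp add: add_divide_distrib sum_divide_distrib)
  also have "\<dots> \<le> log 2 n + (8 + real n * ?E)" using S KL K1 by (simp add: of_nat_diff)
  finally show ?thesis by (simp add: algebra_simps)
qed


lemma cs_ineq:
  fixes f :: "'a \<Rightarrow> real"
  assumes "finite U"
  shows "(\<Sum>x\<in>U. f x)^2 \<le> real (card U) * (\<Sum>x\<in>U. (f x)^2)"
proof -
  have "0 \<le> (\<Sum>x\<in>U. \<Sum>y\<in>U. (f x - f y)^2)" by (intro sum_nonneg) auto
  also have "\<dots> = (\<Sum>x\<in>U. \<Sum>y\<in>U. ((f x)^2 + (f y)^2) - 2 * (f x * f y))"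
    by (simp add: power2_diff mult.assoc)
  also have "\<dots> = (\<Sum>x\<in>U. \<Sum>y\<in>U. (f x)^2) + (\<Sum>x\<in>U. \<Sum>y\<in>U. (f y)^2) - 2 * (\<Sum>x\<in>U. \<Sum>y\<in>U. f x * f y)"
    by (simp only: sum.distrib sum_subtractf sum_distrib_left)
  also have "(\<Sum>x\<in>U. \<Sum>y\<in>U. (f x)^2) = real (card U) * (\<Sum>x\<in>U. (f x)^2)"
    by (simp add: sum_distrib_left)
  also have "(\<Sum>x\<in>U. \<Sum>y\<in>U. (f y)^2) = real (card U) * (\<Sum>x\<in>U. (f x)^2)"
    by simp
  also have "(\<Sum>x\<in>U. \<Sum>y\<in>U. f x * f y) = (\<Sum>x\<in>U. f x)^2"
    by (simp add: sum_product power2_eq_square)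
  finally show ?thesis by simp
qed

lemma EMt_lower0:
  assumes k: "1 \<le> k" "2 * k \<le> n"
  shows "real k * (real (Acl n k))^2 / ((real (Acl n k) + real (Bcl n k)) * real (C n)) \<le> EMt n"
proof -
  let ?S = "{t \<in> T n. 1 \<le> Nk k t}"
  let ?A = "real (Acl n k)" and ?B = "real (Bcl n k)"
  have fin: "finite ?S" using finite_T[of n] by simp
  have Cp: "real (C n) > 0" using C_pos by simp
  have "Acl n k > 0" using k C_pos[of "n - k"] by (simp add: Acl_def)
  then have Ap: "?A > 0" by simp
  have Bn: "?B \<ge> 0" by simp
  have s1: "(\<Sum>t\<in>T n. real (Nk k t)) = (\<Sum>t\<in>?S. real (Nk k t))"
    by (rule sum.mono_neutral_right) (auto simp: finite_T)
  have s2: "(\<Sum>t\<in>T n. (real (Nk k t))^2) = (\<Sum>t\<in>?S. (real (Nk k t))^2)"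
    by (rule sum.mono_neutral_right) (auto simp: finite_T)
  have sA: "(\<Sum>t\<in>T n. real (Nk k t)) = ?A"
    using A_eq[of n k] unfolding Asum_def by (metis of_nat_sum)
  have sq: "(\<Sum>t\<in>T n. (real (Nk k t))^2) = ?A + ?B"
  proof -
    have "\<And>x::nat. real x ^ 2 = real (x * (x - 1)) + real x"
      by (case_tac x) (simp_all add: power2_eq_square algebra_simps)
    then have "(\<Sum>t\<in>T n. (real (Nk k t))^2) = (\<Sum>t\<in>T n. real (Nk k t * (Nk k t - 1))) + (\<Sum>t\<in>T n. real (Nk k t))"
      by (simp add: sum.distrib)
    also have "\<dots> = ?B + ?A"
      using B_eq[of n k] A_eq[of n k] unfolding Asum_def Bsum_def by (metis of_nat_sum)
    finally show ?thesis by simp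
  qed
  have "?A^2 \<le> real (card ?S) * (?A + ?B)"
    using cs_ineq[OF fin, of "\<lambda>t. real (Nk k t)"] s1 s2 sA sq by simp
  then have cS: "?A^2 / (?A + ?B) \<le> real (card ?S)" using Ap Bn by (simp add: field_simps)
  have "real k * real (card ?S) = (\<Sum>t\<in>?S. real k)" by simp
  also have "\<dots> \<le> (\<Sum>t\<in>?S. real (mt t))" by (rule sum_mono) (use Nk_mt in auto)
  also have "\<dots> \<le> (\<Sum>t\<in>T n. real (mt t))" by (rule sum_mono2) (auto simp: finite_T)
  finally have "real k * real (card ?S) \<le> (\<Sum>t\<in>T n. real (mt t))" .
  moreover have "real k * (?A^2 / (?A + ?B)) \<le> real k * real (card ?S)"
    by (rule mult_left_mono[OF cS]) simp
  ultimately have "real k * (?A^2 / (?A + ?B)) \<le> (\<Sum>t\<in>T n. real (mt t))" by linarith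
  then have "real k * (?A^2 / (?A + ?B)) / real (C n) \<le> EMt n"
    unfolding EMt_def using Cp by (intro divide_right_mono) auto
  then show ?thesis by (simp only: times_divide_eq_right divide_divide_eq_left)
qed

lemma combine:
  fixes A B Cn X Y :: real
  assumes "A > 0" "B \<ge> 0" "Cn > 0" "X + Y > 0" "Cn \<le> A * X" "B * Cn \<le> A^2 * Y"
  shows "1 / (X + Y) \<le> A^2 / ((A + B) * Cn)"
proof -
  have "A * Cn \<le> A * (A * X)" using assms by (intro mult_left_mono) auto
  then have "(A + B) * Cn \<le> A^2 * (X + Y)" using assms(6)
    by (simp add: power2_eq_square distrib_left distrib_right mult.assoc)
  have "1 / (X + Y) * ((A + B) * Cn) \<le> 1 / (X + Y) * (A^2 * (X + Y))"
    using \<open>(A + B) * Cn \<le> A^2 * (X + Y)\<close> assms(4) by (intro mult_left_mono) auto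
  also have "\<dots> = A^2" using assms(4) by simp
  finally have "1 / (X + Y) * ((A + B) * Cn) \<le> A^2" .
  moreover have "(A + B) * Cn > 0" using assms by simp
  ultimately show ?thesis by (simp add: pos_le_divide_eq)
qed

lemma EMt_lower1:
  assumes k: "1 \<le> k" and n: "n = 2 * k + m"
  shows "real k / (4^k / (2^(k-1) * (real (k + m) + 1)) + (4 / (4 - 6 / (real m + 2)))^k) \<le> EMt n"
proof -
  define A where "A = real (Acl n k)"
  define B where "B = real (Bcl n k)"
  define Cn where "Cn = real (C n)"
  define X where "X = (4^k / (2^(k-1) * (real (k + m) + 1)) :: real)"
  define q where "q = (4 - 6 / (real m + 2) :: real)"
  define Y where "Y = (4 / q)^k"
  have qpos: "q > 0"
  proof -
    have "6 / (real m + 2) \<le> 3" by (simp add: field_simps)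
    then show ?thesis by (simp add: q_def)
  qed
  have Aeq: "A = 2^(k-1) * (real (k + m) + 1) * real (C (k + m))" using k by (simp add: A_def Acl_def n algebra_simps)
  have Beq: "B = 4^(k-1) * ((real m + 1) * real m) * real (C m)" using k by (simp add: B_def Bcl_def n algebra_simps)
  have Cp: "Cn > 0" using C_pos by (simp add: Cn_def)
  have Ckm: "real (C (k + m)) > 0" using C_pos by simp
  have Cm: "real (C m) > 0" using C_pos by simp
  have Ap: "A > 0" using Aeq Ckm by simp
  have Bn: "B \<ge> 0" by (simp add: B_def)
  have nn: "n = (k + m) + k" using n by simp
  have t1: "Cn \<le> 4^k * real (C (k + m))" unfolding Cn_def nn by (rule T1)
  have t3: "q^k * real (C m) \<le> real (C (k + m))" using T3[of m k] by (simp add: add.commute q_def)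
  have X: "A * X = 4^k * real (C (k + m))"
  proof -
    have nz: "2^(k-1) * (real (k + m) + 1) \<noteq> (0::real)" by simp
    have "A * X = (2^(k-1) * (real (k + m) + 1)) * (4^k / (2^(k-1) * (real (k + m) + 1))) * real (C (k + m))"
      unfolding Aeq X_def by (simp only: mult_ac)
    also have "\<dots> = 4^k * real (C (k + m))" using nz by simp
    finally show ?thesis .
  qed
  then have AX: "Cn \<le> A * X" using t1 by simp
  have p4: "(4::real)^(k-1) = 2^(k-1) * 2^(k-1)" by (simp flip: power_mult_distrib)
  have A2: "A^2 = 4^(k-1) * ((real (k + m) + 1)^2 * real (C (k + m))^2)"
    unfolding Aeq p4 by (simp only: power2_eq_square mult_ac)
  have "B * Cn \<le> 4^(k-1) * ((real (k + m) + 1)^2 * real (C m)) * (4^k * real (C (k + m)))"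
  proof -
    have "(real m + 1) * real m \<le> (real (k + m) + 1)^2" by (simp add: power2_eq_square algebra_simps)
    then have "B \<le> 4^(k-1) * ((real (k + m) + 1)^2 * real (C m))"
      unfolding Beq using Cm by (simp add: mult.assoc mult_left_mono mult_right_mono)
    then show ?thesis using t1 Cp by (intro mult_mono) auto
  qed
  also have "\<dots> \<le> A^2 * Y"
  proof -
    have "4^k * real (C m) \<le> real (C (k + m)) * Y"
    proof -
      have "q^k * real (C m) * (4/q)^k \<le> real (C (k + m)) * (4/q)^k"
        using t3 qpos by (intro mult_right_mono) auto
      moreover have "q^k * (4/q)^k = 4^k" using qpos by (simp flip: power_mult_distrib)
      ultimately show ?thesis by (simp add: Y_def ac_simps)
    qed
    then have "4^(k-1) * ((real (k + m) + 1)^2 * real (C (k + m))) * (4^k * real (C m))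
        \<le> 4^(k-1) * ((real (k + m) + 1)^2 * real (C (k + m))) * (real (C (k + m)) * Y)"
      using Ckm by (intro mult_left_mono) auto
    then show ?thesis unfolding A2 by (simp only: power2_eq_square mult_ac)
  qed
  finally have BY: "B * Cn \<le> A^2 * Y" .
  have "X > 0" by (simp add: X_def)
  moreover have "Y > 0" using qpos by (simp add: Y_def)
  ultimately have XYpos: "X + Y > 0" by simp
  have "1 / (X + Y) \<le> A^2 / ((A + B) * Cn)"
    by (rule combine[OF Ap Bn Cp XYpos AX BY])
  then have "real k * (1 / (X + Y)) \<le> real k * (A^2 / ((A + B) * Cn))"
    by (rule mult_left_mono) simp
  then have "real k / (X + Y) \<le> real k * A^2 / ((A + B) * Cn)"
    by (simp only: times_divide_eq_right mult_1_right)
  also have "\<dots> \<le> EMt n" unfolding A_def B_def Cn_def by (rule EMt_lower0) (use k n in auto)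
  finally show ?thesis by (simp add: X_def Y_def q_def)
qed


lemma EMt_lower_final:
  fixes n :: nat
  defines "L \<equiv> log 2 (real n)"
  assumes h1: "1 \<le> L - 2 * log 2 L" and h2: "2 * L \<le> real n" and h3: "2 < real n - 2 * L + 2"
    and h4: "1 < L"
  shows "(L - 2 * log 2 L - 1) / (2 * (real n / L^2) / (real n - L + 1)
     + (4 / (4 - 6 / (real n - 2 * L + 2))) powr L) \<le> EMt n"
proof -
  define kr where "kr = L - 2 * log 2 L"
  define k where "k = nat \<lfloor>kr\<rfloor>"
  have npos: "real n > 0" using h4 L_def by (cases "n = 0") (auto simp: log_def)
  have lL: "log 2 L \<ge> 0" using h4 by simp
  have kr1: "kr \<ge> 1" using h1 by (simp add: kr_def)
  have fl: "1 \<le> \<lfloor>kr\<rfloor>" using kr1 by (simp add: le_floor_iff)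
  have kk: "real k = of_int \<lfloor>kr\<rfloor>" using fl by (simp add: k_def)
  have k1: "1 \<le> k" using fl by (simp add: k_def le_nat_iff)
  have kle: "real k \<le> kr" using kk by simp
  have kge: "real k \<ge> kr - 1" using kk by linarith
  have krL: "kr \<le> L" using lL by (simp add: kr_def)
  have "2 * real k \<le> real n" using kle krL h2 by linarith
  then have k2n: "2 * k \<le> n" by linarith
  define m where "m = n - 2 * k"
  have nm: "n = 2 * k + m" using k2n by (simp add: m_def)
  have low: "real k / (4^k / (2^(k-1) * (real (k + m) + 1)) + (4 / (4 - 6 / (real m + 2)))^k) \<le> EMt n"
    by (rule EMt_lower1[OF k1 nm])
  define X where "X = (4::real)^k / (2^(k-1) * (real (k + m) + 1))"
  define q where "q = 4 - 6 / (real m + 2)"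
  define Y where "Y = (4 / q)^k"
  define g1 where "g1 = 2 * (real n / L^2) / (real n - L + 1)"
  define D where "D = real n - 2 * L + 2"
  define q0 where "q0 = 4 - 6 / D"
  define g2 where "g2 = (4 / q0) powr L"
  have Lpos: "L > 0" using h4 by simp
  have d1: "real (k + m) + 1 = real n - real k + 1" using nm by simp
  have d1pos: "real n - L + 1 \<le> real (k + m) + 1" using d1 kle krL by linarith
  have d0: "real n - L + 1 > 0" using h2 Lpos by linarith
  have "2 powr real k \<le> 2 powr kr" using kle by (intro powr_mono) auto
  also have "2 powr kr = real n / L^2"
  proof -
    have "2 powr kr = 2 powr L / 2 powr (2 * log 2 L)" by (simp add: kr_def powr_diff)
    also have "2 powr L = real n" using npos by (simp add: L_def)
    also have "2 powr (2 * log 2 L) = L^2"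
    proof -
      have "2 powr (2 * log 2 L) = (2 powr log 2 L) powr 2" by (simp add: powr_powr mult.commute)
      also have "\<dots> = L powr 2" using Lpos by simp
      also have "\<dots> = L^2" using Lpos by (simp add: powr_numeral)
      finally show ?thesis .
    qed
    finally show ?thesis .
  qed
  finally have pk: "2^k \<le> real n / L^2" by (simp add: powr_realpow)
  have X2: "X = 2 * 2^k / (real (k + m) + 1)"
  proof -
    have e1: "(4::real)^k = 2^k * 2^k" by (simp flip: power_mult_distrib)
    have e2: "(2::real)^k = 2 * 2^(k-1)" using k1 by (simp flip: power_Suc)
    have p4: "(4::real)^k = 2^(k-1) * (2 * 2^k)" unfolding e1 using e2 by simp
    show ?thesis unfolding X_def p4 by simp
  qed
  have Xle: "X \<le> g1"
  proof -
    have "X \<le> 2 * 2^k / (real n - L + 1)" unfolding X2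
      using d1pos d0 by (intro divide_left_mono) auto
    also have "\<dots> \<le> 2 * (real n / L^2) / (real n - L + 1)"
      using pk d0 by (intro divide_right_mono) auto
    finally show ?thesis by (simp add: g1_def)
  qed
  have Dpos: "D > 2" using h3 by (simp add: D_def)
  have mD: "real m + 2 \<ge> D" using nm kle krL by (simp add: D_def m_def of_nat_diff) 
  have q0pos: "q0 > 1" using Dpos by (simp add: q0_def field_simps)
  have qq0: "q \<ge> q0"
  proof -
    have "6 / (real m + 2) \<le> 6 / D" using mD Dpos by (intro divide_left_mono) auto
    then show ?thesis by (simp add: q_def q0_def)
  qed
  have qpos: "q > 0" using qq0 q0pos by simp
  have q4: "q \<le> 4" by (simp add: q_def)
  have b1: "4 / q \<ge> 1" using qpos q4 by simp
  have Yle: "Y \<le> g2"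
  proof -
    have "Y = (4 / q) powr real k" using qpos by (simp add: Y_def powr_realpow)
    also have "\<dots> \<le> (4 / q) powr L" using b1 kle krL by (intro powr_mono) auto
    also have "\<dots> \<le> (4 / q0) powr L"
      using qq0 qpos q0pos Lpos by (intro powr_mono2) (auto simp: divide_left_mono)
    finally show ?thesis by (simp add: g2_def)
  qed
  have Xpos: "X > 0" by (simp add: X_def)
  have Ypos: "Y > 0" using qpos by (simp add: Y_def)
  have "(L - 2 * log 2 L - 1) / (g1 + g2) \<le> real k / (g1 + g2)"
    using kge Xpos Ypos Xle Yle by (intro divide_right_mono) (auto simp: kr_def)
  also have "\<dots> \<le> real k / (X + Y)"
    using Xle Yle Xpos Ypos by (intro divide_left_mono) auto
  also have "\<dots> \<le> EMt n" using low by (simp add: X_def Y_def q_def)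
  finally show ?thesis by (simp add: g1_def g2_def q0_def D_def)
qed


lemma EM_eq: "EM n = EMt n"
proof -
  have b: "bij_betw phi (T n) (Av_n n [1,3,2])" by (rule phi_bij)
  have "(\<Sum>p\<in>Av_n n [1,3,2]. real (M p)) = (\<Sum>t\<in>T n. real (M (phi t)))"
    by (rule sum.reindex_bij_betw[OF b, symmetric])
  also have "\<dots> = (\<Sum>t\<in>T n. real (mt t))" by (simp add: M_phi)
  finally have s: "(\<Sum>p\<in>Av_n n [1,3,2]. real (M p)) = (\<Sum>t\<in>T n. real (mt t))" .
  have c: "card (Av_n n [1,3,2]) = C n" using bij_betw_same_card[OF b] by (simp add: C_def)
  show ?thesis unfolding EM_def EMt_def s c ..
qed

theorem corollary7:
  shows "EM \<sim>[at_top] (\<lambda>n. log 2 (real n))"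
proof (rule asymp_equivI')
  define lo where "lo = (\<lambda>n::nat. ((log 2 n - 2 * log 2 (log 2 n) - 1) / (2 * (real n / (log 2 n)^2) / (real n - log 2 n + 1)
     + (4 / (4 - 6 / (real n - 2 * log 2 n + 2))) powr (log 2 n))) / log 2 n)"
  define up where "up = (\<lambda>n::nat. (log 2 n + 8 + real n * (real n + 1)^3 / 2 powr ((real n + 1) / 2)) / log 2 n)"
  have lo_lim: "lo \<longlonglongrightarrow> 1" unfolding lo_def by real_asymp
  have up_lim: "up \<longlonglongrightarrow> 1" unfolding up_def by real_asymp
  have ev_lo: "eventually (\<lambda>n. lo n \<le> EM n / log 2 (real n)) sequentially"
  proof -
    have "eventually (\<lambda>n::nat. 1 \<le> log 2 n - 2 * log 2 (log 2 n)) sequentially" by real_asymp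
    moreover have "eventually (\<lambda>n::nat. 2 * log 2 n \<le> real n) sequentially" by real_asymp
    moreover have "eventually (\<lambda>n::nat. 2 < real n - 2 * log 2 n + 2) sequentially" by real_asymp
    moreover have "eventually (\<lambda>n::nat. 1 < log 2 n) sequentially" by real_asymp
    ultimately show ?thesis
    proof eventually_elim
      case (elim n)
      have L: "log 2 (real n) > 0" using elim by simp
      have "(log 2 n - 2 * log 2 (log 2 n) - 1) / (2 * (real n / (log 2 n)^2) / (real n - log 2 n + 1)
         + (4 / (4 - 6 / (real n - 2 * log 2 n + 2))) powr (log 2 n)) \<le> EMt n"
        using EMt_lower_final[of n] elim by simp
      then have "lo n \<le> EMt n / log 2 n" unfolding lo_def using L by (intro divide_right_mono) auto
      then show ?case by (simp add: EM_eq)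
    qed
  qed
  have ev_up: "eventually (\<lambda>n. EM n / log 2 (real n) \<le> up n) sequentially"
    using eventually_ge_at_top[of "2::nat"]
  proof eventually_elim
    case (elim n)
    have L: "log 2 (real n) > 0" using elim by simp
    have "EMt n \<le> log 2 n + 8 + real n * (real n + 1)^3 / 2 powr ((real n + 1) / 2)"
      using EMt_upper[OF elim] by simp
    then have "EMt n / log 2 n \<le> up n" unfolding up_def using L by (intro divide_right_mono) auto
    then show ?case by (simp add: EM_eq)
  qed
  show "((\<lambda>n. EM n / log 2 (real n)) \<longlongrightarrow> 1) at_top"
    by (rule tendsto_sandwich[OF ev_lo ev_up lo_lim up_lim])
qed

end
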